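(* Let $f:(a,b)\to\mathbb R$, $-\infty\le a<0<b\le\infty$, be continuous, strictly increasing, with $f((a,b))=\mathbb R$. Let $\vec X^m\in\underline V^h_{\partial_0}$ satisfy assumptions $(\mathfrak A)$ and $(\mathfrak B)^h$, let $\Delta t_m>0$, and (for the second scheme) let $\kappa^m\in V^h$ be given with $(\kappa^m-\mathfrak K^m(\kappa^m))(q_j)\in(a,b)$ for all $j$. Consider the problem: find $(\delta\vec X^{m+1},\kappa^{m+1})\in\underline V^h_\partial\times V^h$ with $(\kappa^{m+1}-\mathfrak K^m(\kappa^{m+1}))(q_j)\in(a,b)$ for all $j$ such that, with $\vec X^{m+1}=\vec X^m+\delta\vec X^{m+1}$, $$\Big(\tfrac{\vec X^{m+1}-\vec X^m}{\Delta t_m},\chi\,\vec\nu^m|\vec X^m_\rho|\Big)^h=\Big(f(\kappa^{m+1}-\mathfrak K^m(\kappa^{m+1})),\chi|\vec X^m_\rho|\Big)^h-\theta\,G^m\,\big(\chi,|\vec X^m_\rho|\big)^h\quad\forall\chi\in V^h,$$ $$\Big(\kappa^{m+1}\vec\nu^m,\vec\eta\,|\vec X^m_\rho|\Big)^h+\Big(\vec X^{m+1}_\rho,\vec\eta_\rho|\vec X^m_\rho|^{-1}\Big)=-\sum_{i=1}^2\sum_{p\in\partial_iI}\widehat\varrho^{(p)}\,\vec\eta(p)\cdot\vec e_{3-i}\quad\forall\vec\eta\in\underline V^h_\partial,$$ where either $\theta=0$ (scheme $(\mathcal A^f_m)^h$) or $\theta=1$ (scheme $(\mathcal A^{f,V}_m)^h$),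 and $G^m=\frac{(\vec X^m\cdot\vec e_1,\,f(\kappa^m-\mathfrak K^m(\kappa^m))|\vec X^m_\rho|)^h}{(\vec X^m\cdot\vec e_1,|\vec X^m_\rho|)}$. Then, for either choice of $\theta$: if $a=-\infty$ and $b=\infty$, a solution exists; and for general $a<b$ there exists at most one solution.
   Context: Setup. $\vec e_1=(1,0)^T$, $\vec e_2=(0,1)^T$; "$\cdot$" is the Euclidean inner product. $I$ is either the periodic interval $\mathbb R/\mathbb Z$ (with $\partial I=\emptyset$) or $I=(0,1)$ (with $\partial I=\{0,1\}$). $\partial I=\partial_DI\cup\partial_0I\cup\partial_1I\cup\partial_2I$ is a given disjoint partition, and $\widehat\varrho^{(p)}\in\mathbb R$, $p\in\{0,1\}$, are given constants with $|\widehat\varrho^{(p)}|\le1$. Let $J\ge3$, $h=1/J$, $q_j=jh$ ($j=0,\dots,J$; $q_0=q_J$ identified in the periodic case). $V^h$ is the space of continuous functions on $\overline I$ (periodic if $I=\mathbb R/\mathbb Z$) that are affine on each $[q_{j-1},q_j]$; $\underline V^h=[V^h]^2$; $\underline V^h_{\partial_0}=\{\vec\eta\in\underline V^h:\vec\eta(\rho)\cdot\vec e_1=0\ \forall\rho\in\partial_0I\}$; $\underline V^h_\partial=\{\vec\eta\in\underline V^h_{\partial_0}:\vec\eta(\rho)\cdot\vec e_i=0\ \forall\rho\in\partial_iI,\ i=1,2;\ \vec\eta(\rho)=\vec0\ \forall\rho\in\partial_DI\}$. $(\cdot,\cdot)$ is the $L^2(I)$ inner product (with dot product for vector functions), and for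 piecewise continuous $f,g$ the mass-lumped product is $(f,g)^h=\tfrac h2\sum_{j=1}^J[(fg)(q_j^-)+(fg)(q_{j-1}^+)]$; in particular for $\psi\in V^h$, $f(\psi)$ enters $(\cdot,\cdot)^h$ only through its nodal values $f(\psi(q_j))$. For $\vec X^m\in\underline V^h_{\partial_0}$ with $|\vec X^m_\rho|>0$ a.e., set $\vec\nu^m=-[\vec X^m_\rho]^\perp/|\vec X^m_\rho|$, where $(a,b)^\perp=(b,-a)$, and let $\vec\omega^m\in\underline V^h$ be defined by $(\vec\omega^m,\vec\varphi|\vec X^m_\rho|)^h=(\vec\nu^m,\vec\varphi|\vec X^m_\rho|)$ for all $\vec\varphi\in\underline V^h$. Assumption $(\mathfrak A)$: $|\vec X^m_\rho|>0$ a.e. on $I$ and $\vec X^m(\rho)\cdot\vec e_1>0$ for all $\rho\in\overline I\setminus\partial_0I$. Assumption $(\mathfrak B)^h$: the set $\{(\vec\nu^m,\chi|\vec X^m_\rho|)^h:\chi\in V^h\}\subset\mathbb R^2$ spans $\mathbb R^2$. For $\kappa\in V^h$, $\mathfrak K^m(\kappa)\in V^h$ is defined nodally by $\mathfrak K^m(\kappa)(q_j)=\frac{\vec\omega^m(q_j)\cdot\vec e_1}{\vec X^m(q_j)\cdot\vec e_1}$ if $q_j\in\overline I\setminus\partial_0I$ and $\mathfrak K^m(\kappa)(q_j)=-\kappa(q_j)$ if $q_j\in\partial_0I$. *)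

theory Defs
  imports "HOL-Analysis.Analysis"
begin

text \<open>Finite element functions in V^h are represented by their nodal values
 v 0, ..., v J (node q_j = j/J); values beyond J are normalised to 0.
 per = True means the periodic interval R/Z (then v J = v 0).\<close>

definition e1 :: "real \<times> real" where "e1 = (1, 0)"
definition e2 :: "real \<times> real" where "e2 = (0, 1)"
definition perp :: "real \<times> real \<Rightarrow> real \<times> real" where "perp v = (snd v, - fst v)"

definition FE :: "bool \<Rightarrow> nat \<Rightarrow> (nat \<Rightarrow> 'a::zero) set" where
  "FE per J = {v. (\<forall>k>J. v k = 0) \<and> (per \<longrightarrow> v J = v 0)}"

text \<open>boundary points p in {0,1} (index p) correspond to node p*J\<close>
definition bnode :: "nat \<Rightarrow> nat set \<Rightarrow> nat \<Rightarrow> bool" where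
  "bnode J S k = (\<exists>p\<in>S. k = p * J)"

definition Vh_d0 :: "bool \<Rightarrow> nat \<Rightarrow> nat set \<Rightarrow> (nat \<Rightarrow> real \<times> real) set" where
  "Vh_d0 per J d0 = {\<eta> \<in> FE per J. \<forall>p\<in>d0. \<eta> (p * J) \<bullet> e1 = 0}"

definition Vh_dd :: "bool \<Rightarrow> nat \<Rightarrow> nat set \<Rightarrow> nat set \<Rightarrow> nat set \<Rightarrow> nat set
    \<Rightarrow> (nat \<Rightarrow> real \<times> real) set" where
  "Vh_dd per J dD d0 d1 d2 = {\<eta> \<in> Vh_d0 per J d0.
      (\<forall>p\<in>d1. \<eta> (p * J) \<bullet> e1 = 0) \<and> (\<forall>p\<in>d2. \<eta> (p * J) \<bullet> e2 = 0) \<and>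
      (\<forall>p\<in>dD. \<eta> (p * J) = 0)}"

text \<open>piecewise affine interpolant on [0,1] and piecewise constant functions
  (c j is the value on the element (q_{j-1}, q_j))\<close>
definition interp :: "nat \<Rightarrow> (nat \<Rightarrow> 'a::real_vector) \<Rightarrow> real \<Rightarrow> 'a" where
  "interp J v s = (let j = nat \<lceil>s * real J\<rceil> in
     if j = 0 then v 0 else v (j - 1) + (s * real J - real (j - 1)) *\<^sub>R (v j - v (j - 1)))"

definition pw :: "nat \<Rightarrow> (nat \<Rightarrow> 'a) \<Rightarrow> real \<Rightarrow> 'a" where
  "pw J c s = c (nat \<lceil>s * real J\<rceil>)"

definition Xrho :: "nat \<Rightarrow> (nat \<Rightarrow> real \<times> real) \<Rightarrow> nat \<Rightarrow> real \<times> real" where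
  "Xrho J X j = real J *\<^sub>R (X j - X (j - 1))"

definition lenX :: "nat \<Rightarrow> (nat \<Rightarrow> real \<times> real) \<Rightarrow> nat \<Rightarrow> real" where
  "lenX J X j = norm (Xrho J X j)"

definition nu :: "nat \<Rightarrow> (nat \<Rightarrow> real \<times> real) \<Rightarrow> nat \<Rightarrow> real \<times> real" where
  "nu J X j = (- 1 / lenX J X j) *\<^sub>R perp (Xrho J X j)"

text \<open>mass-lumped product: F j k is the value of the (piecewise continuous) integrand,
  restricted to element j = (q_{j-1}, q_j), at the node q_k (k = j-1 or k = j).
  (f,g)^h = h/2 * sum_j [(fg)(q_j^-) + (fg)(q_{j-1}^+)], h = 1/J.\<close>
definition lump :: "nat \<Rightarrow> (nat \<Rightarrow> nat \<Rightarrow> 'a::real_vector) \<Rightarrow> 'a" where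
  "lump J F = ((1 / real J) / 2) *\<^sub>R (\<Sum>j = 1..J. F j j + F j (j - 1))"

definition omega :: "bool \<Rightarrow> nat \<Rightarrow> (nat \<Rightarrow> real \<times> real) \<Rightarrow> nat \<Rightarrow> real \<times> real" where
  "omega per J X = (THE w. w \<in> FE per J \<and>
     (\<forall>\<phi> \<in> FE per J. lump J (\<lambda>j k. (w k \<bullet> \<phi> k) * lenX J X j)
        = integral {0..1} (\<lambda>s. (pw J (nu J X) s \<bullet> interp J \<phi> s) * pw J (lenX J X) s)))"

definition Kop :: "bool \<Rightarrow> nat \<Rightarrow> nat set \<Rightarrow> (nat \<Rightarrow> real \<times> real) \<Rightarrow> (nat \<Rightarrow> real)
    \<Rightarrow> nat \<Rightarrow> real" where
  "Kop per J d0 X \<kappa> k = (if J < k then 0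
      else if bnode J d0 k then - \<kappa> k
      else (omega per J X k \<bullet> e1) / (X k \<bullet> e1))"

definition Gm :: "bool \<Rightarrow> nat \<Rightarrow> nat set \<Rightarrow> (real \<Rightarrow> real) \<Rightarrow> (nat \<Rightarrow> real \<times> real)
    \<Rightarrow> (nat \<Rightarrow> real) \<Rightarrow> real" where
  "Gm per J d0 f X \<kappa> =
     lump J (\<lambda>j k. (X k \<bullet> e1) * f (\<kappa> k - Kop per J d0 X \<kappa> k) * lenX J X j)
     / integral {0..1} (\<lambda>s. (interp J X s \<bullet> e1) * pw J (lenX J X) s)"

definition is_solution :: "bool \<Rightarrow> nat \<Rightarrow> nat set \<Rightarrow> nat set \<Rightarrow> nat set \<Rightarrow> nat set
   \<Rightarrow> (nat \<Rightarrow> real) \<Rightarrow> ereal \<Rightarrow> ereal \<Rightarrow> (real \<Rightarrow> real) \<Rightarrow> real \<Rightarrow> real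
   \<Rightarrow> (nat \<Rightarrow> real \<times> real) \<Rightarrow> (nat \<Rightarrow> real)
   \<Rightarrow> (nat \<Rightarrow> real \<times> real) \<Rightarrow> (nat \<Rightarrow> real) \<Rightarrow> bool" where
  "is_solution per J dD d0 d1 d2 \<rho> a b f \<theta> \<Delta>t X \<kappa>m \<delta>X \<kappa> =
    (let Xn = (\<lambda>k. X k + \<delta>X k);
         K = Kop per J d0 X \<kappa>;
         G = Gm per J d0 f X \<kappa>m in
     \<delta>X \<in> Vh_dd per J dD d0 d1 d2 \<and> \<kappa> \<in> FE per J \<and>
     (\<forall>k\<le>J. a < ereal (\<kappa> k - K k) \<and> ereal (\<kappa> k - K k) < b) \<and>
     (\<forall>\<psi> \<in> FE per J.
        lump J (\<lambda>j k. (((1 / \<Delta>t) *\<^sub>R (Xn k - X k)) \<bullet> nu J X j) * \<psi> k * lenX J X j)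
        = lump J (\<lambda>j k. f (\<kappa> k - K k) * \<psi> k * lenX J X j)
          - \<theta> * G * lump J (\<lambda>j k. \<psi> k * lenX J X j)) \<and>
     (\<forall>\<eta> \<in> Vh_dd per J dD d0 d1 d2.
        lump J (\<lambda>j k. \<kappa> k * (nu J X j \<bullet> \<eta> k) * lenX J X j)
        + integral {0..1} (\<lambda>s. (pw J (Xrho J Xn) s \<bullet> pw J (Xrho J \<eta>) s) / pw J (lenX J X) s)
        = - (\<Sum>p\<in>d1. \<rho> p * (\<eta> (p * J) \<bullet> e2)) - (\<Sum>p\<in>d2. \<rho> p * (\<eta> (p * J) \<bullet> e1))))"

end

theory Submission
  imports Defs
begin



lemma pw_int_aux:
  fixes c :: "nat \<Rightarrow> real" assumes J: "J > 0"
  shows "n \<le> J \<Longrightarrow> ((\<lambda>s. c (nat \<lceil>s * real J\<rceil>)) has_integral (\<Sum>j=1..n. c j) / real J) {0..real n / real J}"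
proof (induction n)
  case 0
  then show ?case using has_integral_refl(1)[of "\<lambda>s. c (nat \<lceil>s * real J\<rceil>)" "0::real"] by simp
next
  case (Suc n)
  have a: "((\<lambda>s. c (nat \<lceil>s * real J\<rceil>)) has_integral (\<Sum>j=1..n. c j) / real J) {0..real n / real J}"
    using Suc by simp
  have "((\<lambda>s. c (Suc n)) has_integral c (Suc n) * (real (Suc n) / real J - real n / real J)) {real n / real J..real (Suc n) / real J}"
    using has_integral_const_real[of "c (Suc n)" "real n / real J" "real (Suc n) / real J"] J
    by (simp add: divide_right_mono mult.commute)
  moreover have "c (Suc n) * (real (Suc n) / real J - real n / real J) = c (Suc n) / real J"
    by (simp add: diff_divide_distrib[symmetric])
  ultimately have cst: "((\<lambda>s. c (Suc n)) has_integral c (Suc n) / real J) {real n / real J..real (Suc n) / real J}" by simp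
  have b: "((\<lambda>s. c (nat \<lceil>s * real J\<rceil>)) has_integral c (Suc n) / real J) {real n / real J..real (Suc n) / real J}"
  proof (rule has_integral_spike_finite[OF _ _ cst, where S="{real n / real J}"])
    fix s assume "s \<in> {real n / real J..real (Suc n) / real J} - {real n / real J}"
    then have s: "real n / real J \<le> s \<and> s \<le> (1 + real n) / real J \<and> s \<noteq> real n / real J" by auto
    have "real n < s * real J" using s J by (auto simp: field_simps)
    moreover have "s * real J \<le> 1 + real n" using s J by (auto simp: field_simps)
    ultimately have "\<lceil>s * real J\<rceil> = int (Suc n)" by (intro ceiling_unique) auto
    then show "c (nat \<lceil>s * real J\<rceil>) = c (Suc n)" by (metis nat_int of_nat_Suc)
  qed simp
  have "((\<lambda>s. c (nat \<lceil>s * real J\<rceil>)) has_integral ((\<Sum>j=1..n. c j) / real J + c (Suc n) / real J)) {0..real (Suc n) / real J}"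
    by (rule has_integral_combine[OF _ _ a b]) (use J in \<open>auto simp: divide_right_mono\<close>)
  then show ?case by (simp add: add_divide_distrib)
qed

lemma pw_integral:
  fixes c :: "nat \<Rightarrow> real" assumes J: "J > 0"
  shows "integral {0..1} (\<lambda>s. c (nat \<lceil>s * real J\<rceil>)) = (\<Sum>j=1..J. c j) / real J"
  using pw_int_aux[OF J, of J c] J by (simp add: integral_unique)




lemma lump_cong:
  assumes "\<And>j. j \<in> {1..J} \<Longrightarrow> F j j = G j j" "\<And>j. j \<in> {1..J} \<Longrightarrow> F j (j-1) = G j (j-1)"
  shows "lump J F = lump J G"
  unfolding lump_def using assms by (auto intro!: sum.cong arg_cong2[where f=scaleR])

lemma lump_add: "lump J (\<lambda>j k. F j k + G j k) = lump J F + lump J G"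
  unfolding lump_def by (simp add: sum.distrib[symmetric] scaleR_add_right[symmetric] add_ac)

lemma lump_diff: "lump J (\<lambda>j k. F j k - G j k) = lump J F - lump J G"
  unfolding lump_def by (simp add: sum_subtractf[symmetric] scaleR_diff_right[symmetric] algebra_simps)

lemma lump_scale: "lump J (\<lambda>j k. c * F j k) = c * (lump J F :: real)"
  unfolding lump_def by (simp add: sum_distrib_left algebra_simps)

lemma lump_sum: "finite S \<Longrightarrow> lump J (\<lambda>j k. \<Sum>i\<in>S. F i j k) = (\<Sum>i\<in>S. lump J (F i))"
  by (induction S rule: finite_induct) (simp_all add: lump_add, simp add: lump_def)

lemma lump_inner: "v \<bullet> lump J F = lump J (\<lambda>j k. v \<bullet> F j k)"
  unfolding lump_def by (simp add: inner_sum_right inner_add_right)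

lemma lump_nonneg:
  assumes "\<And>j. j \<in> {1..J} \<Longrightarrow> F j j \<ge> (0::real)" "\<And>j. j \<in> {1..J} \<Longrightarrow> F j (j-1) \<ge> 0"
  shows "lump J F \<ge> 0"
  unfolding lump_def using assms by (auto intro!: sum_nonneg add_nonneg_nonneg divide_nonneg_nonneg)

lemma lump_eq0:
  assumes "J > 0" "\<And>j. j \<in> {1..J} \<Longrightarrow> F j j \<ge> (0::real)" "\<And>j. j \<in> {1..J} \<Longrightarrow> F j (j-1) \<ge> 0"
    and "lump J F = 0"
  shows "\<And>j. j \<in> {1..J} \<Longrightarrow> F j j = 0 \<and> F j (j-1) = 0"
proof -
  fix j assume j: "j \<in> {1..J}"
  have "(\<Sum>j = 1..J. F j j + F j (j - 1)) = 0" using assms(1,4) unfolding lump_def by simp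
  then have "\<forall>j\<in>{1..J}. F j j + F j (j - 1) = 0"
    by (subst sum_nonneg_eq_0_iff[symmetric]) (use assms(2,3) in auto)
  then show "F j j = 0 \<and> F j (j-1) = 0" using j assms(2,3)[OF j] by force
qed

lemma pw_integral2:
  assumes "J > 0"
  shows "integral {0..1} (\<lambda>s. (pw J A s \<bullet> pw J B s) / pw J L s) = (\<Sum>j=1..J. (A j \<bullet> B j) / L j) / real J"
  unfolding pw_def using pw_integral[OF assms, of "\<lambda>j. (A j \<bullet> B j) / L j"] by simp

lemma sol_iff:
  assumes "J > 0"
  shows "is_solution per J dD d0 d1 d2 \<rho> a b f \<theta> \<Delta>t X \<kappa>m \<delta>X \<kappa> \<longleftrightarrow>
    \<delta>X \<in> Vh_dd per J dD d0 d1 d2 \<and> \<kappa> \<in> FE per J \<and>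
    (\<forall>k\<le>J. a < ereal (\<kappa> k - Kop per J d0 X \<kappa> k) \<and> ereal (\<kappa> k - Kop per J d0 X \<kappa> k) < b) \<and>
    (\<forall>\<psi> \<in> FE per J. lump J (\<lambda>j k. ((\<delta>X k \<bullet> nu J X j) / \<Delta>t) * \<psi> k * lenX J X j)
        = lump J (\<lambda>j k. f (\<kappa> k - Kop per J d0 X \<kappa> k) * \<psi> k * lenX J X j)
          - \<theta> * Gm per J d0 f X \<kappa>m * lump J (\<lambda>j k. \<psi> k * lenX J X j)) \<and>
    (\<forall>\<eta> \<in> Vh_dd per J dD d0 d1 d2.
        lump J (\<lambda>j k. \<kappa> k * (nu J X j \<bullet> \<eta> k) * lenX J X j)
        + (\<Sum>j=1..J. (Xrho J (\<lambda>k. X k + \<delta>X k) j \<bullet> Xrho J \<eta> j) / lenX J X j) / real J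
        = - (\<Sum>p\<in>d1. \<rho> p * (\<eta> (p * J) \<bullet> e2)) - (\<Sum>p\<in>d2. \<rho> p * (\<eta> (p * J) \<bullet> e1)))"
  unfolding is_solution_def Let_def pw_integral2[OF assms]
  by (simp add: divide_inverse mult.commute)




lemma smono_sign:
  assumes "strict_mono_on S f" "x \<in> S" "y \<in> S"
  shows "0 \<le> (f x - f y) * (x - y :: real)" and "(f x - f y) * (x - y) = 0 \<Longrightarrow> x = y"
proof -
  have "x < y \<Longrightarrow> f x < (f y :: real)" using assms strict_mono_onD by metis
  moreover have "y < x \<Longrightarrow> f y < f x" using assms strict_mono_onD by metis
  ultimately show "0 \<le> (f x - f y) * (x - y :: real)"
    by (cases "x < y"; cases "y < x") (auto intro: mult_nonpos_nonpos mult_nonneg_nonneg)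
  show "(f x - f y) * (x - y) = 0 \<Longrightarrow> x = y"
    using \<open>x < y \<Longrightarrow> f x < f y\<close> \<open>y < x \<Longrightarrow> f y < f x\<close> by (cases "x < y"; cases "y < x") auto
qed

lemma Kop_le: "k \<le> J \<Longrightarrow> Kop per J d0 X \<kappa> k = (if bnode J d0 k then - \<kappa> k else (omega per J X k \<bullet> e1) / (X k \<bullet> e1))"
  by (simp add: Kop_def)

lemma u_diff: "k \<le> J \<Longrightarrow> (\<kappa>1 k - Kop per J d0 X \<kappa>1 k) - (\<kappa>2 k - Kop per J d0 X \<kappa>2 k)
   = (if bnode J d0 k then 2 else 1) * (\<kappa>1 k - \<kappa>2 k)"
  by (simp add: Kop_le)

lemma span_orth_zero:
  assumes "span S = UNIV" "\<And>v. v \<in> S \<Longrightarrow> c \<bullet> v = 0"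
  shows "c = (0::real \<times> real)"
proof -
  have "orthogonal c c" by (rule orthogonal_to_span) (use assms in \<open>auto simp: orthogonal_def\<close>)
  then show ?thesis by (simp add: orthogonal_def)
qed

lemma FE_diff: "(u::nat\<Rightarrow>real) \<in> FE per J \<Longrightarrow> v \<in> FE per J \<Longrightarrow> (\<lambda>k. u k - v k) \<in> FE per J"
  by (auto simp: FE_def)

lemma Vh_dd_diff: "u \<in> Vh_dd per J dD d0 d1 d2 \<Longrightarrow> v \<in> Vh_dd per J dD d0 d1 d2 \<Longrightarrow> (\<lambda>k. u k - v k) \<in> Vh_dd per J dD d0 d1 d2"
  by (simp add: Vh_dd_def Vh_d0_def FE_def inner_diff_left)

lemma Xrho_diff: "Xrho J (\<lambda>k. u k - v k) j = Xrho J u j - Xrho J v j"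
  by (simp add: Xrho_def algebra_simps)

lemma lump0: "lump J (\<lambda>j k. 0::real) = 0" by (simp add: lump_def)

lemma uniqueness:
  assumes J: "J > 0"
    and Sm: "strict_mono_on {x. a < ereal x \<and> ereal x < b} f"
    and A1: "\<forall>j\<in>{1..J}. lenX J X j > 0"
    and B: "span {lump J (\<lambda>j k. (\<psi> k * lenX J X j) *\<^sub>R nu J X j) | \<psi>. \<psi> \<in> FE per J} = UNIV"
    and dt: "\<Delta>t > 0"
    and s1: "is_solution per J dD d0 d1 d2 \<rho> a b f \<theta> \<Delta>t X \<kappa>m \<delta>X1 \<kappa>1"
    and s2: "is_solution per J dD d0 d1 d2 \<rho> a b f \<theta> \<Delta>t X \<kappa>m \<delta>X2 \<kappa>2"
  shows "\<delta>X1 = \<delta>X2 \<and> \<kappa>1 = \<kappa>2"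
proof -
  let ?l = "lenX J X" and ?n = "nu J X" and ?V = "Vh_dd per J dD d0 d1 d2"
  let ?u1 = "\<lambda>k. \<kappa>1 k - Kop per J d0 X \<kappa>1 k" and ?u2 = "\<lambda>k. \<kappa>2 k - Kop per J d0 X \<kappa>2 k"
  define \<delta> where "\<delta> = (\<lambda>k. \<delta>X1 k - \<delta>X2 k)"
  define \<kappa> where "\<kappa> = (\<lambda>k. \<kappa>1 k - \<kappa>2 k)"
  note S1 = s1[unfolded sol_iff[OF J]] and S2 = s2[unfolded sol_iff[OF J]]
  have V: "\<delta> \<in> ?V" unfolding \<delta>_def using S1 S2 by (intro Vh_dd_diff) auto
  have K: "\<kappa> \<in> FE per J" unfolding \<kappa>_def using S1 S2 by (intro FE_diff) auto
  have e21: "lump J (\<lambda>j k. \<kappa>1 k * (?n j \<bullet> \<delta> k) * ?l j)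
        + (\<Sum>j=1..J. (Xrho J (\<lambda>k. X k + \<delta>X1 k) j \<bullet> Xrho J \<delta> j) / ?l j) / real J
        = - (\<Sum>p\<in>d1. \<rho> p * (\<delta> (p * J) \<bullet> e2)) - (\<Sum>p\<in>d2. \<rho> p * (\<delta> (p * J) \<bullet> e1))"
    using S1 V by blast
  have e22: "lump J (\<lambda>j k. \<kappa>2 k * (?n j \<bullet> \<delta> k) * ?l j)
        + (\<Sum>j=1..J. (Xrho J (\<lambda>k. X k + \<delta>X2 k) j \<bullet> Xrho J \<delta> j) / ?l j) / real J
        = - (\<Sum>p\<in>d1. \<rho> p * (\<delta> (p * J) \<bullet> e2)) - (\<Sum>p\<in>d2. \<rho> p * (\<delta> (p * J) \<bullet> e1))"
    using S2 V by blast
  have xr: "Xrho J (\<lambda>k. X k + \<delta>X1 k) j - Xrho J (\<lambda>k. X k + \<delta>X2 k) j = Xrho J \<delta> j" for j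
    unfolding \<delta>_def Xrho_def by (simp add: algebra_simps)
  have "lump J (\<lambda>j k. \<kappa>1 k * (?n j \<bullet> \<delta> k) * ?l j) - lump J (\<lambda>j k. \<kappa>2 k * (?n j \<bullet> \<delta> k) * ?l j)
     + ((\<Sum>j=1..J. (Xrho J (\<lambda>k. X k + \<delta>X1 k) j \<bullet> Xrho J \<delta> j) / ?l j) - (\<Sum>j=1..J. (Xrho J (\<lambda>k. X k + \<delta>X2 k) j \<bullet> Xrho J \<delta> j) / ?l j)) / real J = 0"
    using e21 e22 by (simp only: diff_divide_distrib)
  also have "(\<Sum>j=1..J. (Xrho J (\<lambda>k. X k + \<delta>X1 k) j \<bullet> Xrho J \<delta> j) / ?l j) - (\<Sum>j=1..J. (Xrho J (\<lambda>k. X k + \<delta>X2 k) j \<bullet> Xrho J \<delta> j) / ?l j)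
     = (\<Sum>j=1..J. (Xrho J \<delta> j \<bullet> Xrho J \<delta> j) / ?l j)"
    by (simp add: sum_subtractf[symmetric] diff_divide_distrib[symmetric] inner_diff_left[symmetric] xr)
  also have "lump J (\<lambda>j k. \<kappa>1 k * (?n j \<bullet> \<delta> k) * ?l j) - lump J (\<lambda>j k. \<kappa>2 k * (?n j \<bullet> \<delta> k) * ?l j)
      = lump J (\<lambda>j k. \<kappa> k * (?n j \<bullet> \<delta> k) * ?l j)"
    unfolding lump_diff[symmetric] \<kappa>_def by (simp add: algebra_simps)
  finally have P1: "lump J (\<lambda>j k. \<kappa> k * (?n j \<bullet> \<delta> k) * ?l j) + (\<Sum>j=1..J. (Xrho J \<delta> j \<bullet> Xrho J \<delta> j) / ?l j) / real J = 0" .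
  have e11: "lump J (\<lambda>j k. ((\<delta>X1 k \<bullet> ?n j) / \<Delta>t) * \<psi> k * ?l j)
        = lump J (\<lambda>j k. f (?u1 k) * \<psi> k * ?l j) - \<theta> * Gm per J d0 f X \<kappa>m * lump J (\<lambda>j k. \<psi> k * ?l j)"
    if "\<psi> \<in> FE per J" for \<psi> using S1 that by blast
  have e12: "lump J (\<lambda>j k. ((\<delta>X2 k \<bullet> ?n j) / \<Delta>t) * \<psi> k * ?l j)
        = lump J (\<lambda>j k. f (?u2 k) * \<psi> k * ?l j) - \<theta> * Gm per J d0 f X \<kappa>m * lump J (\<lambda>j k. \<psi> k * ?l j)"
    if "\<psi> \<in> FE per J" for \<psi> using S2 that by blast
  have E1: "lump J (\<lambda>j k. ((\<delta> k \<bullet> ?n j) / \<Delta>t) * \<psi> k * ?l j) = lump J (\<lambda>j k. (f (?u1 k) - f (?u2 k)) * \<psi> k * ?l j)"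
    if "\<psi> \<in> FE per J" for \<psi>
  proof -
    have "lump J (\<lambda>j k. ((\<delta> k \<bullet> ?n j) / \<Delta>t) * \<psi> k * ?l j) =
      lump J (\<lambda>j k. ((\<delta>X1 k \<bullet> ?n j) / \<Delta>t) * \<psi> k * ?l j) - lump J (\<lambda>j k. ((\<delta>X2 k \<bullet> ?n j) / \<Delta>t) * \<psi> k * ?l j)"
      unfolding lump_diff[symmetric] \<delta>_def by (simp add: algebra_simps inner_diff_left diff_divide_distrib)
    also have "\<dots> = lump J (\<lambda>j k. f (?u1 k) * \<psi> k * ?l j) - lump J (\<lambda>j k. f (?u2 k) * \<psi> k * ?l j)"
      using e11[OF that] e12[OF that] by simp
    also have "\<dots> = lump J (\<lambda>j k. (f (?u1 k) - f (?u2 k)) * \<psi> k * ?l j)"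
      unfolding lump_diff[symmetric] by (simp add: algebra_simps)
    finally show ?thesis .
  qed
  have LHS: "lump J (\<lambda>j k. ((\<delta> k \<bullet> ?n j) / \<Delta>t) * \<kappa> k * ?l j) = (1/\<Delta>t) * lump J (\<lambda>j k. \<kappa> k * (?n j \<bullet> \<delta> k) * ?l j)"
    unfolding lump_scale[symmetric] by (simp add: inner_commute mult.commute mult.left_commute)
  define t where "t = (\<lambda>k. (f (?u1 k) - f (?u2 k)) * \<kappa> k)"
  have ud: "?u1 k - ?u2 k = (if bnode J d0 k then 2 else 1) * \<kappa> k" if "k \<le> J" for k
    using u_diff[OF that, of \<kappa>1 per d0 X \<kappa>2] unfolding \<kappa>_def by simp
  have tpos: "k \<le> J \<Longrightarrow> 0 \<le> t k" for k
  proof -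
    assume k: "k \<le> J"
    have m: "?u1 k \<in> {x. a < ereal x \<and> ereal x < b}" "?u2 k \<in> {x. a < ereal x \<and> ereal x < b}"
      using S1 S2 k by auto
    have "0 \<le> (f (?u1 k) - f (?u2 k)) * (?u1 k - ?u2 k)" by (rule smono_sign(1)[OF Sm m])
    also have "\<dots> = (if bnode J d0 k then 2 else 1) * t k" unfolding ud[OF k] t_def by simp
    finally show ?thesis by (cases "bnode J d0 k") (auto simp: zero_le_mult_iff)
  qed
  have tzero: "k \<le> J \<Longrightarrow> t k = 0 \<Longrightarrow> \<kappa> k = 0" for k
  proof -
    assume k: "k \<le> J" and t0: "t k = 0"
    have m: "?u1 k \<in> {x. a < ereal x \<and> ereal x < b}" "?u2 k \<in> {x. a < ereal x \<and> ereal x < b}"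
      using S1 S2 k by auto
    have "(f (?u1 k) - f (?u2 k)) * (?u1 k - ?u2 k) = (if bnode J d0 k then 2 else 1) * t k"
      unfolding ud[OF k] t_def by simp
    then have "(f (?u1 k) - f (?u2 k)) * (?u1 k - ?u2 k) = 0" using t0 by simp
    then have "?u1 k = ?u2 k" by (rule smono_sign(2)[OF Sm m])
    then show "\<kappa> k = 0" using ud[OF k] by (cases "bnode J d0 k") auto
  qed
  have Q: "lump J (\<lambda>j k. (f (?u1 k) - f (?u2 k)) * \<kappa> k * ?l j) = lump J (\<lambda>j k. t k * ?l j)"
    unfolding t_def by simp
  have tl: "0 \<le> t j * ?l j \<and> 0 \<le> t (j-1) * ?l j" if "j \<in> {1..J}" for j
  proof -
    have "0 < ?l j" using A1 that by auto
    moreover have "0 \<le> t j" "0 \<le> t (j-1)" using tpos that by auto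
    ultimately show ?thesis by simp
  qed
  have Qnn: "lump J (\<lambda>j k. t k * ?l j) \<ge> 0"
    by (rule lump_nonneg) (use tl in auto)
  have Snn: "(\<Sum>j=1..J. (Xrho J \<delta> j \<bullet> Xrho J \<delta> j) / ?l j) \<ge> 0"
    using A1 by (auto intro!: sum_nonneg divide_nonneg_pos)
  have P: "lump J (\<lambda>j k. \<kappa> k * (?n j \<bullet> \<delta> k) * ?l j) = \<Delta>t * lump J (\<lambda>j k. t k * ?l j)"
    using E1[OF K] LHS Q dt by (simp add: field_simps)
  have Q0: "lump J (\<lambda>j k. t k * ?l j) = 0" and S0: "(\<Sum>j=1..J. (Xrho J \<delta> j \<bullet> Xrho J \<delta> j) / ?l j) = 0"
  proof -
    have "\<Delta>t * lump J (\<lambda>j k. t k * ?l j) + (\<Sum>j=1..J. (Xrho J \<delta> j \<bullet> Xrho J \<delta> j) / ?l j) / real J = 0"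
      using P1 P by simp
    moreover have "0 \<le> \<Delta>t * lump J (\<lambda>j k. t k * ?l j)" using dt Qnn by simp
    moreover have "0 \<le> (\<Sum>j=1..J. (Xrho J \<delta> j \<bullet> Xrho J \<delta> j) / ?l j) / real J" using Snn by simp
    ultimately show "lump J (\<lambda>j k. t k * ?l j) = 0" "(\<Sum>j=1..J. (Xrho J \<delta> j \<bullet> Xrho J \<delta> j) / ?l j) = 0"
      using dt J by (auto simp: add_nonneg_eq_0_iff)
  qed
  have t0: "t k = 0" if "k \<le> J" for k
  proof -
    have z: "t j * ?l j = 0 \<and> t (j - 1) * ?l j = 0" if "j \<in> {1..J}" for j
      using lump_eq0[OF J _ _ Q0, of j] tl that by auto
    show ?thesis
    proof (cases "k = 0")
      case True
      have "0 < ?l 1" using A1 J by auto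
      then show ?thesis using z[of 1] J True by auto
    next
      case False
      have "0 < ?l k" using A1 False that by auto
      then show ?thesis using z[of k] False that by auto
    qed
  qed
  have kap: "\<kappa>1 = \<kappa>2"
  proof
    fix k show "\<kappa>1 k = \<kappa>2 k"
    proof (cases "k \<le> J")
      case True then show ?thesis using tzero[OF True t0[OF True]] unfolding \<kappa>_def by simp
    next
      case False then show ?thesis using S1 S2 by (auto simp: FE_def)
    qed
  qed
  have dr: "Xrho J \<delta> j = 0" if "j \<in> {1..J}" for j
  proof -
    have "\<forall>j\<in>{1..J}. (Xrho J \<delta> j \<bullet> Xrho J \<delta> j) / ?l j = 0"
      by (subst sum_nonneg_eq_0_iff[symmetric]) (use A1 S0 in \<open>auto intro!: divide_nonneg_pos\<close>)
    then have "(Xrho J \<delta> j \<bullet> Xrho J \<delta> j) / ?l j = 0" using that by blast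
    moreover have "0 < ?l j" using that A1 by blast
    ultimately show ?thesis by simp
  qed
  have dc: "\<delta> k = \<delta> 0" if "k \<le> J" for k
    using that
  proof (induction k)
    case (Suc k)
    have "Xrho J \<delta> (Suc k) = 0" using dr[of "Suc k"] Suc.prems by auto
    then have "\<delta> (Suc k) = \<delta> k" using J by (simp add: Xrho_def)
    then show ?case using Suc by simp
  qed simp
  have orth: "\<delta> 0 \<bullet> v = 0" if vin: "v \<in> {lump J (\<lambda>j k. (\<psi> k * lenX J X j) *\<^sub>R nu J X j) | \<psi>. \<psi> \<in> FE per J}" for v
  proof -
    from vin obtain \<psi> where \<psi>: "\<psi> \<in> FE per J" "v = lump J (\<lambda>j k. (\<psi> k * lenX J X j) *\<^sub>R nu J X j)" by auto
    have "lump J (\<lambda>j k. ((\<delta> k \<bullet> ?n j) / \<Delta>t) * \<psi> k * ?l j) = lump J (\<lambda>j k. (f (?u2 k) - f (?u2 k)) * \<psi> k * ?l j)"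
      using E1[OF \<psi>(1)] unfolding kap .
    also have "\<dots> = 0" by (simp add: lump0)
    finally have z: "lump J (\<lambda>j k. ((\<delta> k \<bullet> ?n j) / \<Delta>t) * \<psi> k * ?l j) = 0" .
    have "lump J (\<lambda>j k. ((\<delta> k \<bullet> ?n j) / \<Delta>t) * \<psi> k * ?l j) = (1/\<Delta>t) * (\<delta> 0 \<bullet> v)"
      unfolding \<psi>(2) lump_inner lump_scale[symmetric]
    proof (rule lump_cong)
      fix j assume j: "j \<in> {1..J}"
      have "\<delta> j = \<delta> 0" "\<delta> (j-1) = \<delta> 0" using dc[of j] dc[of "j-1"] j by auto
      then show "(\<delta> j \<bullet> ?n j / \<Delta>t) * \<psi> j * ?l j = 1 / \<Delta>t * (\<delta> 0 \<bullet> (\<psi> j * ?l j) *\<^sub>R ?n j)"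
        "(\<delta> (j-1) \<bullet> ?n j / \<Delta>t) * \<psi> (j-1) * ?l j = 1 / \<Delta>t * (\<delta> 0 \<bullet> (\<psi> (j-1) * ?l j) *\<^sub>R ?n j)"
        by (simp_all only: inner_scaleR_right) (simp_all add: field_simps)
    qed
    then show ?thesis using z dt by simp
  qed
  have "\<delta> 0 = 0" by (rule span_orth_zero[OF B orth])
  have del: "\<delta>X1 = \<delta>X2"
  proof
    fix k show "\<delta>X1 k = \<delta>X2 k"
    proof (cases "k \<le> J")
      case True then show ?thesis using dc[OF True] \<open>\<delta> 0 = 0\<close> unfolding \<delta>_def by simp
    next
      case False then show ?thesis using S1 S2 by (auto simp: Vh_dd_def Vh_d0_def FE_def)
    qed
  qed
  show ?thesis using del kap by simp
qed




definition nd :: "(real \<Rightarrow> real) \<Rightarrow> bool" where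
  "nd g \<longleftrightarrow> continuous_on UNIV g \<and> mono g"

definition gd :: "(real \<Rightarrow> real) \<Rightarrow> bool" where
  "gd g \<longleftrightarrow> continuous_on UNIV g \<and> strict_mono g \<and> (\<forall>y. \<exists>s. y \<le> g s) \<and> (\<forall>y. \<exists>s. g s \<le> y)"

lemma gd_nd: "gd g \<Longrightarrow> nd g"
  unfolding gd_def nd_def by (auto intro: strict_mono_mono)

lemma nd_const: "nd (\<lambda>s. c)" unfolding nd_def by (auto simp: mono_def)

lemma nd_add: "nd g \<Longrightarrow> nd h \<Longrightarrow> nd (\<lambda>s. g s + h s)"
  unfolding nd_def by (auto intro!: continuous_intros simp: mono_def add_mono)

lemma nd_scale: "c \<ge> 0 \<Longrightarrow> nd g \<Longrightarrow> nd (\<lambda>s. c * g s)"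
  unfolding nd_def by (auto intro!: continuous_intros simp: mono_def mult_left_mono)

lemma gd_scale: "c > 0 \<Longrightarrow> gd g \<Longrightarrow> gd (\<lambda>s. c * g s)"
  unfolding gd_def
proof (intro conjI allI)
  assume c: "c > 0" and g: "continuous_on UNIV g \<and> strict_mono g \<and> (\<forall>y. \<exists>s. y \<le> g s) \<and> (\<forall>y. \<exists>s. g s \<le> y)"
  show "continuous_on UNIV (\<lambda>s. c * g s)" using g by (auto intro!: continuous_intros)
  show "strict_mono (\<lambda>s. c * g s)" using g c by (auto simp: strict_mono_def)
  fix y
  obtain s where "y / c \<le> g s" using g by blast
  then show "\<exists>s. y \<le> c * g s" using c by (auto simp: field_simps)
  obtain s' where "g s' \<le> y / c" using g by blast
  then show "\<exists>s. c * g s \<le> y" using c by (auto simp: field_simps)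
qed

lemma gd_add: "gd g \<Longrightarrow> nd h \<Longrightarrow> gd (\<lambda>s. g s + h s)"
  unfolding gd_def
proof (intro conjI allI)
  assume g: "continuous_on UNIV g \<and> strict_mono g \<and> (\<forall>y. \<exists>s. y \<le> g s) \<and> (\<forall>y. \<exists>s. g s \<le> y)"
    and h: "nd h"
  have hm: "mono h" and hc: "continuous_on UNIV h" using h unfolding nd_def by auto
  have gm: "strict_mono g" using g by auto
  show "continuous_on UNIV (\<lambda>s. g s + h s)" using g hc by (auto intro!: continuous_intros)
  show "strict_mono (\<lambda>s. g s + h s)" using gm hm
    by (auto simp: strict_mono_def mono_def intro: add_less_le_mono)
  fix y
  obtain s where s: "y - h 0 \<le> g s" using g by blast
  have "g s \<le> g (max s 0)" "h 0 \<le> h (max s 0)"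
    using strict_mono_mono[OF gm] hm by (auto simp: mono_def)
  then show "\<exists>s. y \<le> g s + h s" using s by (intro exI[of _ "max s 0"]) auto
  obtain s' where s': "g s' \<le> y - h 0" using g by blast
  have "g (min s' 0) \<le> g s'" "h (min s' 0) \<le> h 0"
    using strict_mono_mono[OF gm] hm by (auto simp: mono_def)
  then show "\<exists>s. g s + h s \<le> y" using s' by (intro exI[of _ "min s' 0"]) auto
qed

lemma nd_sum: "finite S \<Longrightarrow> (\<And>i. i \<in> S \<Longrightarrow> nd (g i)) \<Longrightarrow> nd (\<lambda>s. \<Sum>i\<in>S. g i s)"
proof (induction S rule: finite_induct)
  case empty then show ?case by (simp add: nd_const)
next
  case (insert x F) then show ?case by (simp add: nd_add)
qed

lemma gd_sum: "finite S \<Longrightarrow> i0 \<in> S \<Longrightarrow> gd (g i0) \<Longrightarrow> (\<And>i. i \<in> S \<Longrightarrow> nd (g i)) \<Longrightarrow> gd (\<lambda>s. \<Sum>i\<in>S. g i s)"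
proof -
  assume S: "finite S" "i0 \<in> S" "gd (g i0)" "\<And>i. i \<in> S \<Longrightarrow> nd (g i)"
  have "(\<lambda>s. \<Sum>i\<in>S. g i s) = (\<lambda>s. g i0 s + (\<Sum>i\<in>S - {i0}. g i s))"
    using S by (auto simp: sum.remove)
  moreover have "nd (\<lambda>s. \<Sum>i\<in>S - {i0}. g i s)" using S by (intro nd_sum) auto
  ultimately show ?thesis using gd_add S(3) by simp
qed

lemma gd_base:
  assumes fc: "continuous_on UNIV f" and fm: "strict_mono (f::real\<Rightarrow>real)" and fs: "surj f" and c: "c > 0"
  shows "gd (\<lambda>s. f (c * s - K) - G)"
  unfolding gd_def
proof (intro conjI allI)
  show "continuous_on UNIV (\<lambda>s. f (c * s - K) - G)"
    by (intro continuous_intros continuous_on_compose2[OF fc]) auto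
  show "strict_mono (\<lambda>s. f (c * s - K) - G)" using fm c by (auto simp: strict_mono_def)
  fix y
  obtain z where z: "f z = y + G" using fs by (metis surjD)
  have "c * ((z + K) / c) - K = z" using c by (simp add: field_simps)
  then show "\<exists>s. y \<le> f (c * s - K) - G" "\<exists>s. f (c * s - K) - G \<le> y"
    using z by (auto intro!: exI[of _ "(z + K) / c"])
qed

lemma gd_inv:
  assumes "gd g"
  shows "\<And>s. inv g (g s) = s" "\<And>y. g (inv g y) = y" "strict_mono (inv g)" "continuous_on UNIV (inv g)"
proof -
  have gc: "continuous_on UNIV g" and gm: "strict_mono g" and up: "\<forall>y. \<exists>s. y \<le> g s" and lo: "\<forall>y. \<exists>s. g s \<le> y"
    using assms unfolding gd_def by auto
  have inj: "inj g" using gm by (rule strict_mono_imp_inj_on)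
  show i1: "\<And>s. inv g (g s) = s" using inj by simp
  have surj: "surj g"
  proof -
    { fix y
      obtain s1 where s1: "g s1 \<le> y" using lo by blast
      obtain s2 where s2: "y \<le> g s2" using up by blast
      have "s1 \<le> s2"
      proof (rule ccontr)
        assume "\<not> s1 \<le> s2" then have "g s2 < g s1" using gm by (auto simp: strict_mono_def)
        then show False using s1 s2 by simp
      qed
      then have "\<exists>x. s1 \<le> x \<and> x \<le> s2 \<and> g x = y"
        using s1 s2 by (intro IVT') (auto intro: continuous_on_subset[OF gc])
      then have "y \<in> range g" by auto }
    then show ?thesis by auto
  qed
  show i2: "\<And>y. g (inv g y) = y" using surj by (simp add: surj_f_inv_f)
  show "strict_mono (inv g)"
  proof (rule strict_monoI)
    fix x y :: real assume "x < y"
    show "inv g x < inv g y"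
    proof (rule ccontr)
      assume "\<not> inv g x < inv g y"
      then have "g (inv g y) \<le> g (inv g x)" using strict_mono_mono[OF gm] by (auto simp: mono_def)
      then show False using \<open>x < y\<close> i2 by simp
    qed
  qed
  show "continuous_on UNIV (inv g)"
  proof (rule continuous_at_imp_continuous_on, intro ballI)
    fix y :: real
    have "isCont (inv g) (g (inv g y))"
      by (rule isCont_inverse_function[where d=1]) (use i1 gc in \<open>auto simp: continuous_on_eq_continuous_at\<close>)
    then show "isCont (inv g) y" using i2 by simp
  qed
qed

definition Hf :: "(real \<Rightarrow> real) \<Rightarrow> real \<Rightarrow> real" where
  "Hf h s = (LBINT t=ereal 0..ereal s. h t)"

lemma Hf_deriv:
  assumes "continuous_on UNIV h"
  shows "(Hf h has_real_derivative h x) (at x)"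
proof -
  have "((\<lambda>u. LBINT y=ereal 0..ereal u. h y) has_vector_derivative h x) (at x within {-(\<bar>x\<bar>+1)..\<bar>x\<bar>+1})"
    by (rule interval_integral_FTC2[where a="-(\<bar>x\<bar>+1)" and b="\<bar>x\<bar>+1" and c=0])
       (auto intro: continuous_on_subset[OF assms])
  moreover have "at x within {-(\<bar>x\<bar>+1)..\<bar>x\<bar>+1} = at x" by (rule at_within_Icc_at) auto
  ultimately show ?thesis unfolding Hf_def has_real_derivative_iff_has_vector_derivative by simp
qed

lemma tangent_bound:
  assumes d: "\<And>x. (F has_real_derivative g x) (at x)" and m: "mono g"
  shows "F y + g y * (s - y) \<le> F s"
proof -
  have cont: "continuous_on A F" for A using d by (meson DERIV_isCont continuous_at_imp_continuous_on)
  have dif: "F differentiable (at x)" for x using d real_differentiable_def by blast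
  consider "s < y" | "s = y" | "y < s" by linarith
  then show ?thesis
  proof cases
    case 1
    obtain l z where z: "s < z" "z < y" "DERIV F z :> l" "F y - F s = (y - s) * l"
      using MVT[OF 1 cont dif] by blast
    have "l = g z" using z(3) d DERIV_unique by blast
    then have "l \<le> g y" using m z(2) by (auto simp: mono_def)
    then have "(y - s) * l \<le> (y - s) * g y" using 1 by (intro mult_left_mono) auto
    then show ?thesis using z(4) by (simp add: algebra_simps)
  next
    case 2 then show ?thesis by simp
  next
    case 3
    obtain l z where z: "y < z" "z < s" "DERIV F z :> l" "F s - F y = (s - y) * l"
      using MVT[OF 3 cont dif] by blast
    have "l = g z" using z(3) d DERIV_unique by blast
    then have "g y \<le> l" using m z(1) by (auto simp: mono_def)
    then have "(s - y) * g y \<le> (s - y) * l" using 3 by (intro mult_left_mono) auto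
    then show ?thesis using z(4) by (simp add: algebra_simps)
  qed
qed

lemma coercive_H:
  assumes "gd g"
  shows "\<exists>C. \<forall>s. M * \<bar>s\<bar> - C \<le> Hf (inv g) s"
proof -
  note gi = gd_inv[OF assms]
  have d: "\<And>x. (Hf (inv g) has_real_derivative inv g x) (at x)" by (rule Hf_deriv[OF gi(4)])
  have m: "mono (inv g)" by (rule strict_mono_mono[OF gi(3)])
  let ?C = "max (M * g M - Hf (inv g) (g M)) (- M * g (-M) - Hf (inv g) (g (-M)))"
  have "M * \<bar>s\<bar> - ?C \<le> Hf (inv g) s" for s
  proof -
    have 1: "Hf (inv g) (g M) + M * (s - g M) \<le> Hf (inv g) s"
      using tangent_bound[OF d m, of "g M" s] gi(1) by simp
    have 2: "Hf (inv g) (g (-M)) + (-M) * (s - g (-M)) \<le> Hf (inv g) s"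
      using tangent_bound[OF d m, of "g (-M)" s] gi(1) by simp
    show ?thesis using 1 2 by (cases "s \<ge> 0") (auto simp: algebra_simps)
  qed
  then show ?thesis by blast
qed




lemma lump_scaleR: "lump J (\<lambda>j k. c *\<^sub>R F j k) = c *\<^sub>R lump J F"
  unfolding lump_def by (simp add: scaleR_sum_right scaleR_add_right)

locale exs =
  fixes per :: bool and J :: nat and dD d0 d1 d2 :: "nat set" and \<rho> :: "nat \<Rightarrow> real" and f :: "real \<Rightarrow> real"
    and X :: "nat \<Rightarrow> real \<times> real" and \<Delta>t G0 :: real
  assumes J: "J > 0" and fc: "continuous_on UNIV f" and fm: "strict_mono f" and fs: "surj f"
    and A1: "\<forall>j\<in>{1..J}. lenX J X j > 0" and dt: "\<Delta>t > 0"
    and B: "span {lump J (\<lambda>j k. (\<psi> k * lenX J X j) *\<^sub>R nu J X j) | \<psi>. \<psi> \<in> FE per J} = UNIV"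
    and d1: "d1 \<subseteq> {0,1}" and d2: "d2 \<subseteq> {0,1}"
begin

definition rep where "rep k = (if per \<and> k = J then 0 else k)"
definition NN where "NN = (if per then {0..<J} else {0..J})"
definition ind :: "nat \<Rightarrow> nat \<Rightarrow> real" where "ind k k' = (if rep k' = k then 1 else 0)"
definition mm where "mm k = lump J (\<lambda>j k'. (ind k k' * lenX J X j) *\<^sub>R nu J X j)"
definition cU where "cU k' = (if bnode J d0 k' then 2 else (1::real))"
definition KU where "KU k' = (if bnode J d0 k' then 0 else (omega per J X k' \<bullet> e1) / (X k' \<bullet> e1))"
definition phi where "phi k s = lump J (\<lambda>j k'. ind k k' * lenX J X j * (f (cU k' * s - KU k') - G0))"
definition hinv where "hinv k = inv (phi k)"
definition HH where "HH k = Hf (hinv k)"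
definition af where "af y z = (\<Sum>j=1..J. (Xrho J y j \<bullet> Xrho J z j) / lenX J X j) / real J"
definition LL where "LL \<eta> = - (\<Sum>p\<in>d1. \<rho> p * (\<eta> (p * J) \<bullet> e2)) - (\<Sum>p\<in>d2. \<rho> p * (\<eta> (p * J) \<bullet> e1))"
definition EE where "EE x = (\<Sum>k\<in>NN. \<Delta>t * HH k ((x k \<bullet> mm k) / \<Delta>t)) + af X x + af x x / 2 - LL x"
definition kap where "kap x k' = (if k' \<le> J then hinv (rep k') ((x (rep k') \<bullet> mm (rep k')) / \<Delta>t) else 0)"

lemma NN_fin: "finite NN" by (simp add: NN_def)
lemma rep_in: "k' \<le> J \<Longrightarrow> rep k' \<in> NN" using J by (auto simp: rep_def NN_def)
lemma NN_le: "k \<in> NN \<Longrightarrow> k \<le> J" by (auto simp: NN_def split: if_splits)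
lemma rep_NN: "k \<in> NN \<Longrightarrow> rep k = k" by (auto simp: rep_def NN_def split: if_splits)
lemma FE_rep: "v \<in> FE per J \<Longrightarrow> v (rep k') = v k'" by (auto simp: rep_def FE_def)
lemma Kop_U: "k' \<le> J \<Longrightarrow> \<kappa> k' - Kop per J d0 X \<kappa> k' = cU k' * \<kappa> k' - KU k'"
  by (simp add: Kop_le cU_def KU_def)
lemma cU_pos: "cU k > 0" by (simp add: cU_def)

lemma sum_ind: "k' \<le> J \<Longrightarrow> (\<Sum>k\<in>NN. c k * ind k k') = c (rep k')"
proof -
  assume k': "k' \<le> J"
  have "(\<Sum>k\<in>NN. c k * ind k k') = (\<Sum>k\<in>NN. if k = rep k' then c k else 0)"
    by (rule sum.cong) (auto simp: ind_def)
  also have "\<dots> = c (rep k')" using rep_in[OF k'] NN_fin by (simp add: sum.delta')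
  finally show ?thesis .
qed

lemma regroup:
  assumes "\<psi> \<in> FE per J"
  shows "lump J (\<lambda>j k'. \<psi> k' *\<^sub>R F j k') = (\<Sum>k\<in>NN. \<psi> k *\<^sub>R lump J (\<lambda>j k'. ind k k' *\<^sub>R F j k'))"
proof -
  have "(\<Sum>k\<in>NN. \<psi> k *\<^sub>R lump J (\<lambda>j k'. ind k k' *\<^sub>R F j k')) = (\<Sum>k\<in>NN. lump J (\<lambda>j k'. (\<psi> k * ind k k') *\<^sub>R F j k'))"
    by (simp add: lump_scaleR[symmetric])
  also have "\<dots> = lump J (\<lambda>j k'. \<Sum>k\<in>NN. (\<psi> k * ind k k') *\<^sub>R F j k')"
    by (rule lump_sum[symmetric, OF NN_fin])
  also have "\<dots> = lump J (\<lambda>j k'. \<psi> k' *\<^sub>R F j k')"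
  proof (rule lump_cong)
    have *: "k' \<le> J \<Longrightarrow> (\<Sum>k\<in>NN. (\<psi> k * ind k k') *\<^sub>R F j k') = \<psi> k' *\<^sub>R F j k'" for k' j
      using sum_ind[of k' \<psi>] FE_rep[OF assms, of k'] by (simp add: scaleR_sum_left[symmetric])
    fix j assume "j \<in> {1..J}"
    then show "(\<Sum>k\<in>NN. (\<psi> k * ind k j) *\<^sub>R F j j) = \<psi> j *\<^sub>R F j j"
      "(\<Sum>k\<in>NN. (\<psi> k * ind k (j-1)) *\<^sub>R F j (j-1)) = \<psi> (j-1) *\<^sub>R F j (j-1)" using * by auto
  qed
  finally show ?thesis by simp
qed

lemma regroup_real:
  assumes "\<psi> \<in> FE per J"
  shows "lump J (\<lambda>j k'. \<psi> k' * F j k') = (\<Sum>k\<in>NN. \<psi> k * lump J (\<lambda>j k'. ind k k' * F j k'))"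
  using regroup[OF assms, of F] by simp

lemma phi_gd: "k \<in> NN \<Longrightarrow> gd (phi k)"
proof -
  assume k: "k \<in> NN"
  let ?A = "\<lambda>j s. ind k j * lenX J X j * (f (cU j * s - KU j) - G0)"
  let ?B = "\<lambda>j s. ind k (j-1) * lenX J X j * (f (cU (j-1) * s - KU (j-1)) - G0)"
  have base: "gd (\<lambda>s. f (cU i * s - KU i) - G0)" for i by (rule gd_base[OF fc fm fs cU_pos])
  have ndA: "nd (?A j)" if "j \<in> {1..J}" for j
  proof -
    have "0 \<le> ind k j * lenX J X j" using A1 that by (auto simp: ind_def intro: less_imp_le)
    from nd_scale[OF this gd_nd[OF base]] show ?thesis by (simp add: mult.assoc)
  qed
  have ndB: "nd (?B j)" if "j \<in> {1..J}" for j
  proof -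
    have "0 \<le> ind k (j-1) * lenX J X j" using A1 that by (auto simp: ind_def intro: less_imp_le)
    from nd_scale[OF this gd_nd[OF base]] show ?thesis by (simp add: mult.assoc)
  qed
  have eq: "phi k = (\<lambda>s. (1 / real J / 2) * (\<Sum>j\<in>{1..J}. ?A j s + ?B j s))"
    by (auto simp: phi_def lump_def)
  obtain j0 where j0: "j0 \<in> {1..J}" "gd (\<lambda>s. ?A j0 s + ?B j0 s)"
  proof (cases "k = 0")
    case True
    have "rep 0 = 0" by (simp add: rep_def)
    then have "gd (?B 1)" using gd_scale[OF _ base, of "lenX J X 1" 0] A1 J True
      by (auto simp: ind_def mult.assoc)
    then have "gd (\<lambda>s. ?B 1 s + ?A 1 s)" using ndA[of 1] J by (intro gd_add) auto
    then show ?thesis using that[of 1] J by (simp add: add.commute)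
  next
    case False
    have "rep k = k" using rep_NN[OF k] .
    then have "gd (?A k)" using gd_scale[OF _ base, of "lenX J X k" k] A1 NN_le[OF k] False
      by (auto simp: ind_def mult.assoc)
    then have "gd (\<lambda>s. ?A k s + ?B k s)" using ndB[of k] NN_le[OF k] False by (intro gd_add) auto
    then show ?thesis using that[of k] NN_le[OF k] False by auto
  qed
  have "gd (\<lambda>s. \<Sum>j\<in>{1..J}. ?A j s + ?B j s)"
  proof (rule gd_sum[where g="\<lambda>j s. ?A j s + ?B j s", OF _ j0])
    fix i assume i: "i \<in> {1..J}"
    show "nd (\<lambda>s. ?A i s + ?B i s)" by (rule nd_add[OF ndA[OF i] ndB[OF i]])
  qed simp
  then show "gd (phi k)" unfolding eq using J by (intro gd_scale) auto
qed

lemma hinv_props: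
  assumes "k \<in> NN"
  shows "\<And>s. hinv k (phi k s) = s" "\<And>y. phi k (hinv k y) = y" "strict_mono (hinv k)"
    "continuous_on UNIV (hinv k)" "\<And>x. (HH k has_real_derivative hinv k x) (at x)"
  using gd_inv[OF phi_gd[OF assms]] Hf_deriv[of "hinv k"] unfolding hinv_def HH_def by auto

lemma span_mm: "span (mm ` NN) = UNIV"
proof -
  have "{lump J (\<lambda>j k. (\<psi> k * lenX J X j) *\<^sub>R nu J X j) | \<psi>. \<psi> \<in> FE per J} \<subseteq> span (mm ` NN)"
  proof
    fix v assume "v \<in> {lump J (\<lambda>j k. (\<psi> k * lenX J X j) *\<^sub>R nu J X j) | \<psi>. \<psi> \<in> FE per J}"
    then obtain \<psi> where \<psi>: "\<psi> \<in> FE per J" and v: "v = lump J (\<lambda>j k. (\<psi> k * lenX J X j) *\<^sub>R nu J X j)" by auto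
    have "lump J (\<lambda>j k. (\<psi> k * lenX J X j) *\<^sub>R nu J X j) = lump J (\<lambda>j k. \<psi> k *\<^sub>R (lenX J X j *\<^sub>R nu J X j))"
      by simp
    also have "\<dots> = (\<Sum>k\<in>NN. \<psi> k *\<^sub>R mm k)"
      unfolding regroup[OF \<psi>] mm_def by simp
    also have "\<dots> \<in> span (mm ` NN)" by (intro span_sum span_scale span_base) auto
    finally show "v \<in> span (mm ` NN)" unfolding v .
  qed
  then have "span {lump J (\<lambda>j k. (\<psi> k * lenX J X j) *\<^sub>R nu J X j) | \<psi>. \<psi> \<in> FE per J} \<subseteq> span (mm ` NN)"
    by (intro span_minimal) auto
  then show ?thesis using B by auto
qed

lemma mu_exists: "\<exists>\<mu>>0. \<forall>v. \<mu> * norm v \<le> (\<Sum>k\<in>NN. \<bar>v \<bullet> mm k\<bar>)"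
proof -
  define p where "p = (\<lambda>v. \<Sum>k\<in>NN. \<bar>v \<bullet> mm k\<bar>)"
  have cp: "continuous_on (sphere 0 1) p" unfolding p_def by (intro continuous_intros)
  have ne: "sphere (0::real\<times>real) 1 \<noteq> {}"
  proof -
    have "(1::real, 0::real) \<in> sphere 0 1" by simp
    then show ?thesis by blast
  qed
  obtain v0 where v0: "v0 \<in> sphere (0::real\<times>real) 1" and v0m: "\<And>y. y \<in> sphere 0 1 \<Longrightarrow> p v0 \<le> p y"
    using continuous_attains_inf[OF compact_sphere ne cp] by auto
  have pnn: "0 \<le> p v" for v unfolding p_def by (intro sum_nonneg) auto
  have pos: "p v0 > 0"
  proof (rule ccontr)
    assume "\<not> p v0 > 0"
    then have "p v0 = 0" using pnn[of v0] by simp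
    then have "\<forall>k\<in>NN. \<bar>v0 \<bullet> mm k\<bar> = 0" unfolding p_def using NN_fin by (subst (asm) sum_nonneg_eq_0_iff) auto
    then have "v0 = 0" by (intro span_orth_zero[OF span_mm]) auto
    then show False using v0 by simp
  qed
  have scale: "p (c *\<^sub>R v) = \<bar>c\<bar> * p v" for c v
    unfolding p_def by (simp add: sum_distrib_left abs_mult)
  have "p v0 * norm v \<le> p v" for v
  proof (cases "v = 0")
    case False
    have "p v0 \<le> p ((1 / norm v) *\<^sub>R v)" using False by (intro v0m) simp
    also have "\<dots> = p v / norm v" using scale[of "1 / norm v" v] by simp
    finally show ?thesis using False by (simp add: field_simps)
  qed (simp add: p_def)
  then show ?thesis using pos unfolding p_def by (auto simp: mult.commute)
qed

end



lemma lump_cong_le: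
  assumes "\<And>j k. j \<in> {1..J} \<Longrightarrow> k \<le> J \<Longrightarrow> F j k = G j k"
  shows "lump J F = lump J G"
  by (rule lump_cong) (use assms in auto)

context exs begin

abbreviation "VV \<equiv> Vh_dd per J dD d0 d1 d2"

lemma V_lin: "x \<in> VV \<Longrightarrow> \<eta> \<in> VV \<Longrightarrow> (\<lambda>k. x k + t *\<^sub>R \<eta> k) \<in> VV"
  by (auto simp: Vh_dd_def Vh_d0_def FE_def inner_add_left)

lemma V0: "(\<lambda>k. 0) \<in> VV"
  by (auto simp: Vh_dd_def Vh_d0_def FE_def)

lemma V_FE: "x \<in> VV \<Longrightarrow> x \<in> FE per J"
  by (auto simp: Vh_dd_def Vh_d0_def)

lemma Xrho_lin: "Xrho J (\<lambda>k. z1 k + t *\<^sub>R z2 k) j = Xrho J z1 j + t *\<^sub>R Xrho J z2 j"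
  by (simp add: Xrho_def algebra_simps)

lemma Xrho_add: "Xrho J (\<lambda>k. z1 k + z2 k) j = Xrho J z1 j + Xrho J z2 j"
  by (simp add: Xrho_def algebra_simps)

lemma af_sym: "af y z = af z y"
  unfolding af_def by (simp add: inner_commute)

lemma af_lin_r: "af y (\<lambda>k. z1 k + t *\<^sub>R z2 k) = af y z1 + t * af y z2"
  unfolding af_def Xrho_lin
  by (simp add: inner_add_right sum.distrib add_divide_distrib sum_distrib_left sum_divide_distrib[symmetric] field_simps)

lemma af_lin_l: "af (\<lambda>k. z1 k + t *\<^sub>R z2 k) y = af z1 y + t * af z2 y"
  using af_lin_r af_sym by metis

lemma af_add_l: "af (\<lambda>k. z1 k + z2 k) y = af z1 y + af z2 y"
  unfolding af_def Xrho_add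
  by (simp add: inner_add_left sum.distrib add_divide_distrib)

lemma LL_lin: "LL (\<lambda>k. z1 k + t *\<^sub>R z2 k) = LL z1 + t * LL z2"
  unfolding LL_def by (simp add: inner_add_left sum.distrib sum_distrib_left algebra_simps)

lemma EE_line:
  "EE (\<lambda>k. x k + t *\<^sub>R \<eta> k) = (\<Sum>k\<in>NN. \<Delta>t * HH k ((x k \<bullet> mm k) / \<Delta>t + t * ((\<eta> k \<bullet> mm k) / \<Delta>t)))
     + (af X x + af x x / 2 - LL x) + t * (af X \<eta> + af x \<eta> - LL \<eta>) + t\<^sup>2 * (af \<eta> \<eta> / 2)"
proof -
  have "af (\<lambda>k. x k + t *\<^sub>R \<eta> k) (\<lambda>k. x k + t *\<^sub>R \<eta> k) = af x x + 2 * t * af x \<eta> + t\<^sup>2 * af \<eta> \<eta>"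
    unfolding af_lin_l af_lin_r using af_sym[of \<eta> x] by (simp add: algebra_simps power2_eq_square)
  moreover have "((x k + t *\<^sub>R \<eta> k) \<bullet> mm k) / \<Delta>t = (x k \<bullet> mm k) / \<Delta>t + t * ((\<eta> k \<bullet> mm k) / \<Delta>t)" for k
    by (simp add: inner_add_left add_divide_distrib)
  ultimately show ?thesis unfolding EE_def af_lin_r LL_lin by (simp add: algebra_simps)
qed

lemma kap_FE: "kap x \<in> FE per J"
  unfolding FE_def
proof (intro CollectI conjI allI impI)
  fix k :: nat assume "J < k" then show "kap x k = 0" by (simp add: kap_def)
next
  assume p: per
  have "rep J = 0" "rep 0 = 0" unfolding rep_def using p J by auto
  then show "kap x J = kap x 0" by (simp add: kap_def)
qed

lemma min_eq2:
  assumes x: "x \<in> VV" and xm: "\<forall>y\<in>VV. EE x \<le> EE y" and \<eta>: "\<eta> \<in> VV"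
  shows "lump J (\<lambda>j k. kap x k * (nu J X j \<bullet> \<eta> k) * lenX J X j)
        + (\<Sum>j=1..J. (Xrho J (\<lambda>k. X k + x k) j \<bullet> Xrho J \<eta> j) / lenX J X j) / real J
        = - (\<Sum>p\<in>d1. \<rho> p * (\<eta> (p * J) \<bullet> e2)) - (\<Sum>p\<in>d2. \<rho> p * (\<eta> (p * J) \<bullet> e1))"
proof -
  define s where "s k = (x k \<bullet> mm k) / \<Delta>t" for k
  define r where "r k = (\<eta> k \<bullet> mm k) / \<Delta>t" for k
  define C0 where "C0 = af X x + af x x / 2 - LL x"
  define C1 where "C1 = af X \<eta> + af x \<eta> - LL \<eta>"
  define C2 where "C2 = af \<eta> \<eta> / 2"
  define g where "g t = (\<Sum>k\<in>NN. \<Delta>t * HH k (s k + t * r k)) + C0 + t * C1 + t\<^sup>2 * C2" for t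
  have gE: "g t = EE (\<lambda>k. x k + t *\<^sub>R \<eta> k)" for t
    unfolding g_def EE_line s_def r_def C0_def C1_def C2_def by simp
  have D: "(g has_real_derivative (\<Sum>k\<in>NN. \<Delta>t * (hinv k (s k) * r k)) + C1) (at 0)"
  proof -
    have "((\<lambda>t. \<Delta>t * HH k (s k + t * r k)) has_real_derivative \<Delta>t * (hinv k (s k) * r k)) (at 0)" if k: "k \<in> NN" for k
    proof -
      have "((\<lambda>t. s k + t * r k) has_real_derivative r k) (at 0)"
        by (auto intro!: derivative_eq_intros)
      from DERIV_chain2[OF hinv_props(5)[OF k] this]
      show ?thesis by (intro DERIV_cmult) simp
    qed
    then have "((\<lambda>t. \<Sum>k\<in>NN. \<Delta>t * HH k (s k + t * r k)) has_real_derivative (\<Sum>k\<in>NN. \<Delta>t * (hinv k (s k) * r k))) (at 0)"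
      by (rule DERIV_sum)
    moreover have "((\<lambda>t. C0 + t * C1 + t\<^sup>2 * C2) has_real_derivative C1) (at 0)"
      by (auto intro!: derivative_eq_intros)
    ultimately have "((\<lambda>t. (\<Sum>k\<in>NN. \<Delta>t * HH k (s k + t * r k)) + (C0 + t * C1 + t\<^sup>2 * C2)) has_real_derivative
       (\<Sum>k\<in>NN. \<Delta>t * (hinv k (s k) * r k)) + C1) (at 0)" by (rule DERIV_add)
    moreover have "g = (\<lambda>t. (\<Sum>k\<in>NN. \<Delta>t * HH k (s k + t * r k)) + (C0 + t * C1 + t\<^sup>2 * C2))"
      by (rule ext) (simp add: g_def add.assoc)
    ultimately show ?thesis by simp
  qed
  have "(\<Sum>k\<in>NN. \<Delta>t * (hinv k (s k) * r k)) + C1 = 0"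
  proof (rule DERIV_local_min[OF D, of 1])
    show "\<forall>y. \<bar>0 - y\<bar> < 1 \<longrightarrow> g 0 \<le> g y"
    proof (intro allI impI)
      fix y :: real
      have "g 0 = EE x" unfolding gE by simp
      also have "\<dots> \<le> EE (\<lambda>k. x k + y *\<^sub>R \<eta> k)" using xm V_lin[OF x \<eta>] by blast
      finally show "g 0 \<le> g y" unfolding gE .
    qed
  qed simp
  moreover have "(\<Sum>k\<in>NN. \<Delta>t * (hinv k (s k) * r k)) = (\<Sum>k\<in>NN. kap x k * (\<eta> k \<bullet> mm k))"
  proof (rule sum.cong)
    fix k assume k: "k \<in> NN"
    have "kap x k = hinv k (s k)" using rep_NN[OF k] NN_le[OF k] by (simp add: kap_def s_def)
    then show "\<Delta>t * (hinv k (s k) * r k) = kap x k * (\<eta> k \<bullet> mm k)" using dt by (simp add: r_def)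
  qed simp
  moreover have "lump J (\<lambda>j k. kap x k * (nu J X j \<bullet> \<eta> k) * lenX J X j) = (\<Sum>k\<in>NN. kap x k * (\<eta> k \<bullet> mm k))"
  proof -
    have "lump J (\<lambda>j k. kap x k * (nu J X j \<bullet> \<eta> k) * lenX J X j) = lump J (\<lambda>j k. kap x k * ((nu J X j \<bullet> \<eta> k) * lenX J X j))"
      by (simp add: mult.assoc)
    also have "\<dots> = (\<Sum>k\<in>NN. kap x k * lump J (\<lambda>j k'. ind k k' * ((nu J X j \<bullet> \<eta> k') * lenX J X j)))"
      by (rule regroup_real[OF kap_FE])
    also have "\<dots> = (\<Sum>k\<in>NN. kap x k * (\<eta> k \<bullet> mm k))"
    proof (rule sum.cong)
      fix k assume k: "k \<in> NN"
      have "lump J (\<lambda>j k'. ind k k' * ((nu J X j \<bullet> \<eta> k') * lenX J X j)) = lump J (\<lambda>j k'. \<eta> k \<bullet> ((ind k k' * lenX J X j) *\<^sub>R nu J X j))"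
      proof (rule lump_cong_le)
        fix j k' assume "j \<in> {1..J}" "k' \<le> J"
        have "rep k' = k \<Longrightarrow> \<eta> k' = \<eta> k" using FE_rep[OF V_FE[OF \<eta>], of k'] by simp
        then show "ind k k' * ((nu J X j \<bullet> \<eta> k') * lenX J X j) = \<eta> k \<bullet> ((ind k k' * lenX J X j) *\<^sub>R nu J X j)"
          by (auto simp: ind_def inner_commute)
      qed
      then show "kap x k * lump J (\<lambda>j k'. ind k k' * ((nu J X j \<bullet> \<eta> k') * lenX J X j)) = kap x k * (\<eta> k \<bullet> mm k)"
        unfolding mm_def lump_inner by simp
    qed simp
    finally show ?thesis .
  qed
  moreover have "(\<Sum>j=1..J. (Xrho J (\<lambda>k. X k + x k) j \<bullet> Xrho J \<eta> j) / lenX J X j) / real J = af X \<eta> + af x \<eta>"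
    using af_add_l[of X x \<eta>] unfolding af_def .
  ultimately show ?thesis unfolding C1_def LL_def by linarith
qed

lemma min_eq1:
  assumes x: "x \<in> VV" and \<psi>: "\<psi> \<in> FE per J"
  shows "lump J (\<lambda>j k. ((x k \<bullet> nu J X j) / \<Delta>t) * \<psi> k * lenX J X j)
        = lump J (\<lambda>j k. f (kap x k - Kop per J d0 X (kap x) k) * \<psi> k * lenX J X j)
          - G0 * lump J (\<lambda>j k. \<psi> k * lenX J X j)"
proof -
  define R where "R j k' = ((x k' \<bullet> nu J X j) / \<Delta>t) * lenX J X j - (f (kap x k' - Kop per J d0 X (kap x) k') - G0) * lenX J X j" for j k'
  have "lump J (\<lambda>j k. ((x k \<bullet> nu J X j) / \<Delta>t) * \<psi> k * lenX J X j)
        - lump J (\<lambda>j k. f (kap x k - Kop per J d0 X (kap x) k) * \<psi> k * lenX J X j)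
        + G0 * lump J (\<lambda>j k. \<psi> k * lenX J X j) = lump J (\<lambda>j k. \<psi> k * R j k)"
    unfolding lump_diff[symmetric] lump_scale[symmetric] lump_add[symmetric] R_def
    by (simp add: algebra_simps)
  also have "\<dots> = (\<Sum>k\<in>NN. \<psi> k * lump J (\<lambda>j k'. ind k k' * R j k'))"
    by (rule regroup_real[OF \<psi>])
  also have "\<dots> = 0"
  proof (rule sum.neutral, intro ballI)
    fix k assume k: "k \<in> NN"
    let ?s = "(x k \<bullet> mm k) / \<Delta>t"
    have kk: "kap x k = hinv k ?s" using rep_NN[OF k] NN_le[OF k] by (simp add: kap_def)
    have "lump J (\<lambda>j k'. ind k k' * R j k') = lump J (\<lambda>j k'. (1 / \<Delta>t) * (x k \<bullet> ((ind k k' * lenX J X j) *\<^sub>R nu J X j)) - ind k k' * lenX J X j * (f (cU k' * kap x k - KU k') - G0))"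
    proof (rule lump_cong_le)
      fix j k' assume "j \<in> {1..J}" and k': "k' \<le> J"
      show "ind k k' * R j k' = (1 / \<Delta>t) * (x k \<bullet> ((ind k k' * lenX J X j) *\<^sub>R nu J X j)) - ind k k' * lenX J X j * (f (cU k' * kap x k - KU k') - G0)"
      proof (cases "rep k' = k")
        case True
        have xe: "x k' = x k" using FE_rep[OF V_FE[OF x], of k'] True by simp
        have ke: "kap x k' = kap x k" using FE_rep[OF kap_FE, of x k'] True by simp
        have fe: "f (kap x k' - Kop per J d0 X (kap x) k') = f (cU k' * kap x k - KU k')"
          using Kop_U[OF k', of "kap x"] ke by simp
        show ?thesis unfolding R_def ind_def using True by (simp add: xe fe algebra_simps)
      next
        case False then show ?thesis by (simp add: ind_def)
      qed
    qed
    also have "\<dots> = (1 / \<Delta>t) * (x k \<bullet> mm k) - phi k (kap x k)"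
      unfolding lump_diff lump_scale mm_def lump_inner phi_def by simp
    also have "\<dots> = 0" unfolding kk hinv_props(2)[OF k] by simp
    finally show "\<psi> k * lump J (\<lambda>j k'. ind k k' * R j k') = 0" by simp
  qed
  finally show ?thesis by simp
qed

end



context exs begin

lemma HH_lower: "\<exists>Cf. \<forall>k\<in>NN. \<forall>s. M * \<bar>s\<bar> - Cf k \<le> HH k s"
proof -
  have "\<forall>k\<in>NN. \<exists>C. \<forall>s. M * \<bar>s\<bar> - C \<le> HH k s"
    using coercive_H[OF phi_gd] unfolding HH_def hinv_def by blast
  then show ?thesis by (rule bchoice)
qed

lemma tele: "k \<le> J \<Longrightarrow> norm (x k - x 0) \<le> (\<Sum>j=1..J. norm (x j - x (j-1)))"
proof -
  assume k: "k \<le> J"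
  have "norm (x k - x 0) \<le> (\<Sum>j=1..k. norm (x j - x (j-1)))"
  proof (induction k)
    case (Suc k)
    have "norm (x (Suc k) - x 0) \<le> norm (x (Suc k) - x k) + norm (x k - x 0)"
      using norm_triangle_ineq[of "x (Suc k) - x k" "x k - x 0"] by simp
    also have "\<dots> \<le> norm (x (Suc k) - x k) + (\<Sum>j=1..k. norm (x j - x (j-1)))" using Suc by simp
    finally show ?case by (simp add: add.commute)
  qed simp
  also have "\<dots> \<le> (\<Sum>j=1..J. norm (x j - x (j-1)))"
    by (rule sum_mono2) (use k in auto)
  finally show ?thesis .
qed

lemma coercive: "\<exists>R. \<forall>x. EE x \<le> EE (\<lambda>k. 0) \<longrightarrow> (\<forall>i\<le>J. norm (x i) \<le> R)"
proof -
  obtain \<mu> where \<mu>: "\<mu> > 0" "\<And>v. \<mu> * norm v \<le> (\<Sum>k\<in>NN. \<bar>v \<bullet> mm k\<bar>)" using mu_exists by blast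
  define Mm where "Mm = (\<Sum>k\<in>NN. norm (mm k))"
  define c1 where "c1 = 2 * Mm"
  define cL where "cL = (\<Sum>p\<in>d1. \<bar>\<rho> p\<bar>) + (\<Sum>p\<in>d2. \<bar>\<rho> p\<bar>)"
  define cX where "cX = (\<Sum>j=1..J. real J * norm (X j - X (j-1)) / lenX J X j)"
  define Lsum where "Lsum = (\<Sum>j=1..J. lenX J X j)"
  define \<alpha> where "\<alpha> = real J / (2 * Lsum)"
  define M where "M = cL / \<mu> + 1"
  define \<beta> where "\<beta> = cX + cL * c1 / \<mu> + 1"
  obtain Cf where Cf: "\<And>k s. k \<in> NN \<Longrightarrow> M * \<bar>s\<bar> - Cf k \<le> HH k s" using HH_lower[of M] by blast
  define C2 where "C2 = \<Delta>t * (\<Sum>k\<in>NN. Cf k) + real J * \<beta>\<^sup>2 / (4 * \<alpha>)"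
  define R where "R = (1 + c1) * (EE (\<lambda>k. 0) + C2) / \<mu>"
  have lpos: "j \<in> {1..J} \<Longrightarrow> lenX J X j > 0" for j using A1 by auto
  have Lpos: "Lsum > 0" unfolding Lsum_def using lpos J by (intro sum_pos) auto
  have lle: "j \<in> {1..J} \<Longrightarrow> lenX J X j \<le> Lsum" for j
    unfolding Lsum_def by (rule member_le_sum) (use lpos in \<open>auto intro: less_imp_le\<close>)
  have apos: "\<alpha> > 0" unfolding \<alpha>_def using Lpos J by simp
  have c1nn: "c1 \<ge> 0" unfolding c1_def Mm_def by (auto intro: sum_nonneg)
  have cLnn: "cL \<ge> 0" unfolding cL_def by (auto intro: sum_nonneg add_nonneg_nonneg)
  have cXge: "j \<in> {1..J} \<Longrightarrow> real J * norm (X j - X (j-1)) / lenX J X j \<le> cX" for j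
    unfolding cX_def by (rule member_le_sum) (use lpos in \<open>auto intro!: divide_nonneg_pos\<close>)
  have fd1: "finite d1" and fd2: "finite d2" using finite_subset[OF d1] finite_subset[OF d2] by auto
  have main: "norm (x i) \<le> R" if Ex: "EE x \<le> EE (\<lambda>k. 0)" and i: "i \<le> J" for x i
  proof -
    define nd where "nd j = norm (x j - x (j-1))" for j
    define D where "D = (\<Sum>j=1..J. nd j)"
    define T where "T = (\<Sum>k\<in>NN. \<bar>x k \<bullet> mm k\<bar>)"
    have Dnn: "D \<ge> 0" unfolding D_def nd_def by (auto intro: sum_nonneg)
    have Tnn: "T \<ge> 0" unfolding T_def by (auto intro: sum_nonneg)
    have dd2: "norm (x a - x b) \<le> 2 * D" if "a \<le> J" "b \<le> J" for a b
    proof -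
      have "norm (x a - x b) \<le> norm (x a - x 0) + norm (x b - x 0)"
        using norm_triangle_ineq4[of "x a - x 0" "x b - x 0"] by simp
      also have "\<dots> \<le> D + D" using tele[OF that(1), of x] tele[OF that(2), of x] unfolding D_def nd_def by simp
      finally show ?thesis by simp
    qed
    have node: "norm (x a) \<le> (T + c1 * D) / \<mu>" if a: "a \<le> J" for a
    proof -
      have "\<mu> * norm (x a) \<le> (\<Sum>k\<in>NN. \<bar>x a \<bullet> mm k\<bar>)" by (rule \<mu>(2))
      also have "\<dots> \<le> (\<Sum>k\<in>NN. \<bar>x k \<bullet> mm k\<bar> + 2 * D * norm (mm k))"
      proof (rule sum_mono)
        fix k assume k: "k \<in> NN"
        have "\<bar>x a \<bullet> mm k\<bar> = \<bar>x k \<bullet> mm k + (x a - x k) \<bullet> mm k\<bar>" by (simp add: inner_diff_left)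
        also have "\<dots> \<le> \<bar>x k \<bullet> mm k\<bar> + \<bar>(x a - x k) \<bullet> mm k\<bar>" by (rule abs_triangle_ineq)
        also have "\<bar>(x a - x k) \<bullet> mm k\<bar> \<le> norm (x a - x k) * norm (mm k)" by (rule Cauchy_Schwarz_ineq2)
        also have "\<dots> \<le> 2 * D * norm (mm k)" using dd2[OF a NN_le[OF k]] by (intro mult_right_mono) auto
        finally show "\<bar>x a \<bullet> mm k\<bar> \<le> \<bar>x k \<bullet> mm k\<bar> + 2 * D * norm (mm k)" by simp
      qed
      also have "\<dots> = T + c1 * D" unfolding T_def c1_def Mm_def
        by (simp add: sum.distrib sum_distrib_left sum_distrib_right mult.assoc mult.left_commute mult.commute)
      finally show ?thesis using \<mu>(1) by (simp add: field_simps)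
    qed
    have E1: "(\<Sum>k\<in>NN. \<Delta>t * HH k ((x k \<bullet> mm k) / \<Delta>t)) \<ge> M * T - \<Delta>t * (\<Sum>k\<in>NN. Cf k)"
    proof -
      have "(\<Sum>k\<in>NN. M * \<bar>x k \<bullet> mm k\<bar> - \<Delta>t * Cf k) \<le> (\<Sum>k\<in>NN. \<Delta>t * HH k ((x k \<bullet> mm k) / \<Delta>t))"
      proof (rule sum_mono)
        fix k assume k: "k \<in> NN"
        have "\<Delta>t * (M * \<bar>(x k \<bullet> mm k) / \<Delta>t\<bar> - Cf k) \<le> \<Delta>t * HH k ((x k \<bullet> mm k) / \<Delta>t)"
          using mult_left_mono[OF Cf[OF k, of "(x k \<bullet> mm k) / \<Delta>t"], of \<Delta>t] dt by simp
        moreover have "\<Delta>t * (M * \<bar>(x k \<bullet> mm k) / \<Delta>t\<bar> - Cf k) = M * \<bar>x k \<bullet> mm k\<bar> - \<Delta>t * Cf k"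
          using dt by (simp add: field_simps abs_div)
        ultimately show "M * \<bar>x k \<bullet> mm k\<bar> - \<Delta>t * Cf k \<le> \<Delta>t * HH k ((x k \<bullet> mm k) / \<Delta>t)" by simp
      qed
      moreover have "(\<Sum>k\<in>NN. M * \<bar>x k \<bullet> mm k\<bar> - \<Delta>t * Cf k) = M * T - \<Delta>t * (\<Sum>k\<in>NN. Cf k)"
        unfolding T_def by (simp add: sum_subtractf sum_distrib_left)
      ultimately show ?thesis by simp
    qed
    have E2: "af X x \<ge> - cX * D"
    proof -
      have "(\<Sum>j=1..J. - (real J * (cX * nd j))) \<le> (\<Sum>j=1..J. (Xrho J X j \<bullet> Xrho J x j) / lenX J X j)"
      proof (rule sum_mono)
        fix j assume j: "j \<in> {1..J}"
        have l: "lenX J X j > 0" using lpos[OF j] .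
        have "- (real J * real J * (norm (X j - X (j-1)) * nd j)) \<le> Xrho J X j \<bullet> Xrho J x j"
        proof -
          have "Xrho J X j \<bullet> Xrho J x j = real J * real J * ((X j - X (j-1)) \<bullet> (x j - x (j-1)))"
            by (simp add: Xrho_def)
          moreover have "- (norm (X j - X (j-1)) * nd j) \<le> (X j - X (j-1)) \<bullet> (x j - x (j-1))"
            using Cauchy_Schwarz_ineq2[of "X j - X (j-1)" "x j - x (j-1)"] unfolding nd_def by linarith
          ultimately show ?thesis using mult_left_mono[of "- (norm (X j - X (j-1)) * nd j)" "(X j - X (j-1)) \<bullet> (x j - x (j-1))" "real J * real J"] by simp
        qed
        then have "- (real J * real J * (norm (X j - X (j-1)) * nd j)) / lenX J X j \<le> (Xrho J X j \<bullet> Xrho J x j) / lenX J X j"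
          using l by (intro divide_right_mono) auto
        moreover have "- (real J * (cX * nd j)) \<le> - (real J * real J * (norm (X j - X (j-1)) * nd j)) / lenX J X j"
        proof -
          have "real J * norm (X j - X (j-1)) / lenX J X j * nd j \<le> cX * nd j"
            using cXge[OF j] by (intro mult_right_mono) (auto simp: nd_def)
          then have "real J * (real J * norm (X j - X (j-1)) / lenX J X j * nd j) \<le> real J * (cX * nd j)"
            by (intro mult_left_mono) auto
          then show ?thesis by (simp add: field_simps)
        qed
        ultimately show "- (real J * (cX * nd j)) \<le> (Xrho J X j \<bullet> Xrho J x j) / lenX J X j" by linarith
      qed
      moreover have "(\<Sum>j=1..J. - (real J * (cX * nd j))) = - (real J * (cX * D))"
        unfolding D_def by (simp add: sum_negf sum_distrib_left)
      ultimately have "- (real J * (cX * D)) \<le> (\<Sum>j=1..J. (Xrho J X j \<bullet> Xrho J x j) / lenX J X j)" by simp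
      then have "- (real J * (cX * D)) / real J \<le> af X x" unfolding af_def using J by (intro divide_right_mono) auto
      then show ?thesis using J by simp
    qed
    have E3: "af x x / 2 \<ge> \<alpha> * (\<Sum>j=1..J. (nd j)\<^sup>2)"
    proof -
      have "(\<Sum>j=1..J. real J * real J * (nd j)\<^sup>2 / Lsum) \<le> (\<Sum>j=1..J. (Xrho J x j \<bullet> Xrho J x j) / lenX J X j)"
      proof (rule sum_mono)
        fix j assume j: "j \<in> {1..J}"
        have "Xrho J x j \<bullet> Xrho J x j = real J * real J * (nd j)\<^sup>2"
          by (simp add: Xrho_def nd_def power2_norm_eq_inner[symmetric] power_mult_distrib power2_eq_square)
        moreover have "real J * real J * (nd j)\<^sup>2 / Lsum \<le> real J * real J * (nd j)\<^sup>2 / lenX J X j"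
          using lpos[OF j] lle[OF j] by (intro divide_left_mono) auto
        ultimately show "real J * real J * (nd j)\<^sup>2 / Lsum \<le> (Xrho J x j \<bullet> Xrho J x j) / lenX J X j" by simp
      qed
      then have "(\<Sum>j=1..J. real J * real J * (nd j)\<^sup>2 / Lsum) / real J \<le> af x x"
        unfolding af_def using J by (intro divide_right_mono) auto
      moreover have "(\<Sum>j=1..J. real J * real J * (nd j)\<^sup>2 / Lsum) / real J = 2 * \<alpha> * (\<Sum>j=1..J. (nd j)\<^sup>2)"
        unfolding \<alpha>_def using J Lpos by (simp add: sum_divide_distrib[symmetric] sum_distrib_left[symmetric] field_simps)
      ultimately show ?thesis by simp
    qed
    have E4: "\<alpha> * (\<Sum>j=1..J. (nd j)\<^sup>2) \<ge> \<beta> * D - real J * \<beta>\<^sup>2 / (4 * \<alpha>)"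
    proof -
      have "\<beta> * nd j - \<beta>\<^sup>2 / (4 * \<alpha>) \<le> \<alpha> * (nd j)\<^sup>2" for j
      proof -
        have "0 \<le> (2 * \<alpha> * nd j - \<beta>)\<^sup>2 / (4 * \<alpha>)" using apos by simp
        also have "\<dots> = \<alpha> * (nd j)\<^sup>2 - \<beta> * nd j + \<beta>\<^sup>2 / (4 * \<alpha>)"
          using apos by (simp add: field_simps power2_eq_square)
        finally show ?thesis by simp
      qed
      then have "(\<Sum>j=1..J. \<beta> * nd j - \<beta>\<^sup>2 / (4 * \<alpha>)) \<le> (\<Sum>j=1..J. \<alpha> * (nd j)\<^sup>2)"
        by (intro sum_mono) auto
      moreover have "(\<Sum>j=1..J. \<beta> * nd j - \<beta>\<^sup>2 / (4 * \<alpha>)) = \<beta> * D - real J * \<beta>\<^sup>2 / (4 * \<alpha>)"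
        unfolding D_def by (simp add: sum_subtractf sum_distrib_left)
      ultimately show ?thesis by (simp add: sum_distrib_left)
    qed
    have E5: "- LL x \<ge> - (cL * ((T + c1 * D) / \<mu>))"
    proof -
      let ?B = "(T + c1 * D) / \<mu>"
      have ne1: "norm e1 = 1" "norm e2 = 1" by (simp_all add: e1_def e2_def)
      have t1: "- (\<bar>\<rho> p\<bar> * ?B) \<le> \<rho> p * (x (p * J) \<bullet> e2)" if "p \<in> d1" for p
      proof -
        have "p * J \<le> J" using that d1 by auto
        then have "norm (x (p * J)) \<le> ?B" by (rule node)
        moreover have "\<bar>x (p * J) \<bullet> e2\<bar> \<le> norm (x (p * J))" using Cauchy_Schwarz_ineq2[of "x (p*J)" e2] ne1 by simp
        ultimately have "\<bar>x (p * J) \<bullet> e2\<bar> \<le> ?B" by linarith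
        then have "\<bar>\<rho> p\<bar> * \<bar>x (p * J) \<bullet> e2\<bar> \<le> \<bar>\<rho> p\<bar> * ?B" by (rule mult_left_mono) simp
        then have "\<bar>\<rho> p * (x (p * J) \<bullet> e2)\<bar> \<le> \<bar>\<rho> p\<bar> * ?B" unfolding abs_mult .
        then show ?thesis unfolding abs_le_iff by linarith
      qed
      have t2: "- (\<bar>\<rho> p\<bar> * ?B) \<le> \<rho> p * (x (p * J) \<bullet> e1)" if "p \<in> d2" for p
      proof -
        have "p * J \<le> J" using that d2 by auto
        then have "norm (x (p * J)) \<le> ?B" by (rule node)
        moreover have "\<bar>x (p * J) \<bullet> e1\<bar> \<le> norm (x (p * J))" using Cauchy_Schwarz_ineq2[of "x (p*J)" e1] ne1 by simp
        ultimately have "\<bar>x (p * J) \<bullet> e1\<bar> \<le> ?B" by linarith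
        then have "\<bar>\<rho> p\<bar> * \<bar>x (p * J) \<bullet> e1\<bar> \<le> \<bar>\<rho> p\<bar> * ?B" by (rule mult_left_mono) simp
        then have "\<bar>\<rho> p * (x (p * J) \<bullet> e1)\<bar> \<le> \<bar>\<rho> p\<bar> * ?B" unfolding abs_mult .
        then show ?thesis unfolding abs_le_iff by linarith
      qed
      have "(\<Sum>p\<in>d1. - (\<bar>\<rho> p\<bar> * ?B)) \<le> (\<Sum>p\<in>d1. \<rho> p * (x (p * J) \<bullet> e2))" by (rule sum_mono) (rule t1)
      moreover have "(\<Sum>p\<in>d2. - (\<bar>\<rho> p\<bar> * ?B)) \<le> (\<Sum>p\<in>d2. \<rho> p * (x (p * J) \<bullet> e1))" by (rule sum_mono) (rule t2)
      moreover have "(\<Sum>p\<in>d1. - (\<bar>\<rho> p\<bar> * ?B)) + (\<Sum>p\<in>d2. - (\<bar>\<rho> p\<bar> * ?B)) = - (cL * ?B)"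
        unfolding cL_def by (simp only: sum_negf sum_distrib_right[symmetric]) (simp add: ring_distribs add_divide_distrib)
      ultimately show ?thesis unfolding LL_def by linarith
    qed
    have EEx: "EE x = (\<Sum>k\<in>NN. \<Delta>t * HH k ((x k \<bullet> mm k) / \<Delta>t)) + af X x + af x x / 2 - LL x"
      by (simp add: EE_def)
    have key: "T + D \<le> EE x + C2"
    proof -
      have "M * T - \<Delta>t * (\<Sum>k\<in>NN. Cf k) - cX * D + (\<beta> * D - real J * \<beta>\<^sup>2 / (4 * \<alpha>)) - cL * ((T + c1 * D) / \<mu>) \<le> EE x"
        using E1 E2 E3 E4 E5 EEx by linarith
      moreover have "M * T - \<Delta>t * (\<Sum>k\<in>NN. Cf k) - cX * D + (\<beta> * D - real J * \<beta>\<^sup>2 / (4 * \<alpha>)) - cL * ((T + c1 * D) / \<mu>)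
          = T + D - C2"
        unfolding M_def \<beta>_def C2_def using \<mu>(1) by (simp add: field_simps)
      ultimately show ?thesis by simp
    qed
    have "norm (x i) \<le> (T + c1 * D) / \<mu>" by (rule node[OF i])
    also have "\<dots> \<le> (1 + c1) * (T + D) / \<mu>"
    proof -
      have "T + c1 * D \<le> (1 + c1) * (T + D)" using c1nn Tnn Dnn by (simp add: algebra_simps)
      then show ?thesis using \<mu>(1) by (intro divide_right_mono) auto
    qed
    also have "\<dots> \<le> R" unfolding R_def using key Ex c1nn \<mu>(1)
      by (intro divide_right_mono mult_left_mono) auto
    finally show ?thesis .
  qed
  then show ?thesis by blast
qed

end



lemma cont_coord [continuous_intros]: "continuous_on S (\<lambda>x::nat \<Rightarrow> 'b::topological_space. x i)"
  by (rule continuous_on_subset[OF continuous_on_product_coordinates]) auto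

lemma closed_imp_const: "closed {x. Q x} \<Longrightarrow> closed {x. P \<longrightarrow> Q x}"
  by (cases P) auto

context exs begin

lemma HH_cont: "k \<in> NN \<Longrightarrow> continuous_on UNIV (HH k)"
  by (meson DERIV_isCont continuous_at_imp_continuous_on hinv_props(5))

lemma EE_cont: "continuous_on UNIV EE"
proof -
  have c1: "continuous_on UNIV (\<lambda>x. \<Sum>k\<in>NN. \<Delta>t * HH k ((x k \<bullet> mm k) / \<Delta>t))"
  proof (rule continuous_on_sum)
    fix k assume k: "k \<in> NN"
    show "continuous_on UNIV (\<lambda>x. \<Delta>t * HH k ((x k \<bullet> mm k) / \<Delta>t))"
      by (intro continuous_on_mult_left continuous_on_compose2[OF HH_cont[OF k]] continuous_intros) (use dt in auto)
  qed
  have c2: "continuous_on UNIV (\<lambda>x. af X x)" unfolding af_def Xrho_def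
    by (intro continuous_intros) (use A1 J in \<open>auto dest: bspec[where x=j for j]\<close>)
  have c3: "continuous_on UNIV (\<lambda>x. af x x)" unfolding af_def Xrho_def
    by (intro continuous_intros) (use A1 J in \<open>auto dest: bspec[where x=j for j]\<close>)
  have c4: "continuous_on UNIV (\<lambda>x. LL x)" unfolding LL_def
    by (intro continuous_intros)
  have c5: "continuous_on UNIV (\<lambda>x. af x x / 2)"
    by (rule continuous_on_divide[OF c3 continuous_on_const]) auto
  have "continuous_on UNIV (\<lambda>x. (\<Sum>k\<in>NN. \<Delta>t * HH k ((x k \<bullet> mm k) / \<Delta>t)) + af X x + af x x / 2 - LL x)"
    by (rule continuous_on_diff[OF continuous_on_add[OF continuous_on_add[OF c1 c2] c5] c4])
  then show ?thesis unfolding EE_def[abs_def] .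
qed

lemma VV_closed: "closed VV"
proof -
  have "VV = {\<eta>. (\<forall>k. J < k \<longrightarrow> \<eta> k = 0) \<and> (per \<longrightarrow> \<eta> J = \<eta> 0) \<and> (\<forall>p. p \<in> d0 \<longrightarrow> \<eta> (p * J) \<bullet> e1 = 0)
     \<and> (\<forall>p. p \<in> d1 \<longrightarrow> \<eta> (p * J) \<bullet> e1 = 0) \<and> (\<forall>p. p \<in> d2 \<longrightarrow> \<eta> (p * J) \<bullet> e2 = 0) \<and> (\<forall>p. p \<in> dD \<longrightarrow> \<eta> (p * J) = 0)}"
    by (auto simp: Vh_dd_def Vh_d0_def FE_def)
  also have "closed \<dots>"
    by (intro closed_Collect_conj closed_Collect_all closed_imp_const closed_Collect_eq continuous_intros)
  finally show ?thesis .
qed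

lemma exists_min: "\<exists>x\<in>VV. \<forall>y\<in>VV. EE x \<le> EE y"
proof -
  obtain R where R: "\<And>x i. EE x \<le> EE (\<lambda>k. 0) \<Longrightarrow> i \<le> J \<Longrightarrow> norm (x i) \<le> R" using coercive by blast
  define C where "C i = (if i \<le> J then cball (0::real\<times>real) R else {0})" for i
  define S where "S = PiE UNIV C \<inter> VV"
  have cC: "compact (PiE UNIV C)"
  proof -
    have "compactin (product_topology (\<lambda>i. euclidean) UNIV) (PiE UNIV C)"
      unfolding compactin_PiE by (auto simp: C_def)
    then show ?thesis by (simp add: euclidean_product_topology)
  qed
  have cS: "compact S" unfolding S_def using cC VV_closed by (rule compact_Int_closed)
  have R0: "R \<ge> 0" using R[of "\<lambda>k. 0" 0] by simp
  have zS: "(\<lambda>k. 0) \<in> S" unfolding S_def using V0 R0 by (auto simp: C_def)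
  then have ne: "S \<noteq> {}" by blast
  obtain x where x: "x \<in> S" and xm: "\<And>y. y \<in> S \<Longrightarrow> EE x \<le> EE y"
    using continuous_attains_inf[OF cS ne continuous_on_subset[OF EE_cont]] by auto
  have "\<forall>y\<in>VV. EE x \<le> EE y"
  proof
    fix y assume y: "y \<in> VV"
    show "EE x \<le> EE y"
    proof (cases "EE y \<le> EE (\<lambda>k. 0)")
      case True
      have "y \<in> S" unfolding S_def using y R[OF True] by (auto simp: C_def Vh_dd_def Vh_d0_def FE_def)
      then show ?thesis by (rule xm)
    next
      case False
      then show ?thesis using xm[OF zS] by simp
    qed
  qed
  then show ?thesis using x unfolding S_def by blast
qed

lemma existence: "\<exists>\<delta>X \<kappa>. \<delta>X \<in> VV \<and> \<kappa> \<in> FE per J \<and>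
    (\<forall>\<psi> \<in> FE per J. lump J (\<lambda>j k. ((\<delta>X k \<bullet> nu J X j) / \<Delta>t) * \<psi> k * lenX J X j)
        = lump J (\<lambda>j k. f (\<kappa> k - Kop per J d0 X \<kappa> k) * \<psi> k * lenX J X j)
          - G0 * lump J (\<lambda>j k. \<psi> k * lenX J X j)) \<and>
    (\<forall>\<eta> \<in> VV.
        lump J (\<lambda>j k. \<kappa> k * (nu J X j \<bullet> \<eta> k) * lenX J X j)
        + (\<Sum>j=1..J. (Xrho J (\<lambda>k. X k + \<delta>X k) j \<bullet> Xrho J \<eta> j) / lenX J X j) / real J
        = - (\<Sum>p\<in>d1. \<rho> p * (\<eta> (p * J) \<bullet> e2)) - (\<Sum>p\<in>d2. \<rho> p * (\<eta> (p * J) \<bullet> e1)))"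
proof -
  obtain x where x: "x \<in> VV" and xm: "\<forall>y\<in>VV. EE x \<le> EE y" using exists_min by blast
  show ?thesis
    using x kap_FE[of x] min_eq1[OF x] min_eq2[OF x xm] by blast
qed

end



theorem theoremB1:
  fixes per :: bool and J :: nat and dD d0 d1 d2 :: "nat set" and \<rho> :: "nat \<Rightarrow> real"
    and a b :: ereal and f :: "real \<Rightarrow> real" and X :: "nat \<Rightarrow> real \<times> real"
    and \<Delta>t \<theta> :: real and \<kappa>m :: "nat \<Rightarrow> real"
  assumes J: "J \<ge> 3"
    and per_bd: "per \<longrightarrow> dD = {} \<and> d0 = {} \<and> d1 = {} \<and> d2 = {}"
    and open_bd: "\<not> per \<longrightarrow> dD \<union> d0 \<union> d1 \<union> d2 = {0, 1} \<and>
        dD \<inter> d0 = {} \<and> dD \<inter> d1 = {} \<and> dD \<inter> d2 = {} \<and>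
        d0 \<inter> d1 = {} \<and> d0 \<inter> d2 = {} \<and> d1 \<inter> d2 = {}"
    and rho: "\<forall>p\<in>{0, 1}. \<bar>\<rho> p\<bar> \<le> 1"
    and ab: "a < 0" "0 < b"
    and f_cont: "continuous_on {x. a < ereal x \<and> ereal x < b} f"
    and f_mono: "strict_mono_on {x. a < ereal x \<and> ereal x < b} f"
    and f_onto: "f ` {x. a < ereal x \<and> ereal x < b} = UNIV"
    and X: "X \<in> Vh_d0 per J d0"
    and A1: "\<forall>j\<in>{1..J}. lenX J X j > 0"
    and A2: "\<forall>s\<in>{0..1}. s \<notin> real ` d0 \<longrightarrow> interp J X s \<bullet> e1 > 0"
    and B: "span {lump J (\<lambda>j k. (\<psi> k * lenX J X j) *\<^sub>R nu J X j) | \<psi>. \<psi> \<in> FE per J} = UNIV"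
    and dt: "\<Delta>t > 0"
    and theta: "\<theta> = 0 \<or> \<theta> = 1"
    and kappam: "\<theta> = 1 \<longrightarrow> \<kappa>m \<in> FE per J \<and>
       (\<forall>k\<le>J. a < ereal (\<kappa>m k - Kop per J d0 X \<kappa>m k) \<and> ereal (\<kappa>m k - Kop per J d0 X \<kappa>m k) < b)"
  shows "(a = -\<infinity> \<and> b = \<infinity> \<longrightarrow>
           (\<exists>\<delta>X \<kappa>. is_solution per J dD d0 d1 d2 \<rho> a b f \<theta> \<Delta>t X \<kappa>m \<delta>X \<kappa>)) \<and>
         (\<forall>\<delta>X1 \<kappa>1 \<delta>X2 \<kappa>2.
            is_solution per J dD d0 d1 d2 \<rho> a b f \<theta> \<Delta>t X \<kappa>m \<delta>X1 \<kappa>1 \<and>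
            is_solution per J dD d0 d1 d2 \<rho> a b f \<theta> \<Delta>t X \<kappa>m \<delta>X2 \<kappa>2 \<longrightarrow>
            \<delta>X1 = \<delta>X2 \<and> \<kappa>1 = \<kappa>2)"
proof -
  have J0: "J > 0" using J by simp
  have uniq: "\<forall>\<delta>X1 \<kappa>1 \<delta>X2 \<kappa>2.
            is_solution per J dD d0 d1 d2 \<rho> a b f \<theta> \<Delta>t X \<kappa>m \<delta>X1 \<kappa>1 \<and>
            is_solution per J dD d0 d1 d2 \<rho> a b f \<theta> \<Delta>t X \<kappa>m \<delta>X2 \<kappa>2 \<longrightarrow>
            \<delta>X1 = \<delta>X2 \<and> \<kappa>1 = \<kappa>2"
    using uniqueness[OF J0 f_mono A1 B dt] by blast
  have ex: "a = -\<infinity> \<and> b = \<infinity> \<longrightarrow>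
           (\<exists>\<delta>X \<kappa>. is_solution per J dD d0 d1 d2 \<rho> a b f \<theta> \<Delta>t X \<kappa>m \<delta>X \<kappa>)"
  proof
    assume ab': "a = -\<infinity> \<and> b = \<infinity>"
    then have U: "{x. a < ereal x \<and> ereal x < b} = UNIV" by auto
    have fc: "continuous_on UNIV f" using f_cont U by simp
    have fm: "strict_mono f" using f_mono U by simp
    have fs: "surj f" using f_onto U by simp
    have d12: "d1 \<subseteq> {0,1} \<and> d2 \<subseteq> {0,1}"
    proof (cases per)
      case True then show ?thesis using per_bd by simp
    next
      case False then have "dD \<union> d0 \<union> d1 \<union> d2 = {0,1}" using open_bd by blast
      then show ?thesis by blast
    qed
    then have d1: "d1 \<subseteq> {0,1}" and d2: "d2 \<subseteq> {0,1}" by auto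
    interpret E: exs per J dD d0 d1 d2 \<rho> f X \<Delta>t "\<theta> * Gm per J d0 f X \<kappa>m"
      by unfold_locales (use J0 fc fm fs A1 dt B d1 d2 in auto)
    obtain \<delta>X \<kappa> where sol: "\<delta>X \<in> Vh_dd per J dD d0 d1 d2 \<and> \<kappa> \<in> FE per J \<and>
    (\<forall>\<psi> \<in> FE per J. lump J (\<lambda>j k. ((\<delta>X k \<bullet> nu J X j) / \<Delta>t) * \<psi> k * lenX J X j)
        = lump J (\<lambda>j k. f (\<kappa> k - Kop per J d0 X \<kappa> k) * \<psi> k * lenX J X j)
          - \<theta> * Gm per J d0 f X \<kappa>m * lump J (\<lambda>j k. \<psi> k * lenX J X j)) \<and>
    (\<forall>\<eta> \<in> Vh_dd per J dD d0 d1 d2.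
        lump J (\<lambda>j k. \<kappa> k * (nu J X j \<bullet> \<eta> k) * lenX J X j)
        + (\<Sum>j=1..J. (Xrho J (\<lambda>k. X k + \<delta>X k) j \<bullet> Xrho J \<eta> j) / lenX J X j) / real J
        = - (\<Sum>p\<in>d1. \<rho> p * (\<eta> (p * J) \<bullet> e2)) - (\<Sum>p\<in>d2. \<rho> p * (\<eta> (p * J) \<bullet> e1)))"
      using E.existence by blast
    have "is_solution per J dD d0 d1 d2 \<rho> a b f \<theta> \<Delta>t X \<kappa>m \<delta>X \<kappa>"
    proof -
      have rng: "\<forall>k\<le>J. a < ereal (\<kappa> k - Kop per J d0 X \<kappa> k) \<and> ereal (\<kappa> k - Kop per J d0 X \<kappa> k) < b"
        using ab' by simp
      show ?thesis
        apply (subst sol_iff[OF J0])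
        using sol rng by (elim conjE) (intro conjI; assumption)
    qed
    then show "\<exists>\<delta>X \<kappa>. is_solution per J dD d0 d1 d2 \<rho> a b f \<theta> \<Delta>t X \<kappa>m \<delta>X \<kappa>" by blast
  qed
  show ?thesis using ex uniq by blast
qed


end
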